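(* Let $p,q\in\Bbbk^\times$. Then $A(q)\cong A(p)$ if and only if $p=q^{\pm1}$.
   Context: $\Bbbk$ is an algebraically closed field of characteristic zero. Paths are written left to right. Let $Q$ be the quiver with vertices $e_1,e_2$, arrows $a,c:e_1\to e_2$ and $b,d:e_2\to e_1$; for $q\in\Bbbk^\times$, $A(q)=\Bbbk Q/(ab-cd,\ ba-q\,dc)$. *)

theory Defs
  imports "HOL-Computational_Algebra.Polynomial" "HOL-Algebra.QuotRing" "HOL-Algebra.Ideal"
begin

datatype vert = E1 | E2
datatype arr = Arr_a | Arr_b | Arr_c | Arr_d

fun src :: "arr \<Rightarrow> vert" where
  "src Arr_a = E1" | "src Arr_c = E1" | "src Arr_b = E2" | "src Arr_d = E2"
fun tgt :: "arr \<Rightarrow> vert" where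
  "tgt Arr_a = E2" | "tgt Arr_c = E2" | "tgt Arr_b = E1" | "tgt Arr_d = E1"

text \<open>A path is a start vertex together with a list of arrows, read left to right
  (the trivial path at v is (v, [])).\<close>
type_synonym path = "vert \<times> arr list"

fun valid_from :: "vert \<Rightarrow> arr list \<Rightarrow> bool" where
  "valid_from v [] = True"
| "valid_from v (x # xs) = (src x = v \<and> valid_from (tgt x) xs)"

definition valid_path :: "path \<Rightarrow> bool" where
  "valid_path p = valid_from (fst p) (snd p)"

fun end_from :: "vert \<Rightarrow> arr list \<Rightarrow> vert" where
  "end_from v [] = v"
| "end_from v (x # xs) = end_from (tgt x) xs"

definition path_end :: "path \<Rightarrow> vert" where
  "path_end p = end_from (fst p) (snd p)"

definition composable :: "path \<Rightarrow> path \<Rightarrow> bool" where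
  "composable p q = (path_end p = fst q)"

definition concat_path :: "path \<Rightarrow> path \<Rightarrow> path" where
  "concat_path p q = (fst p, snd p @ snd q)"

definition supp :: "(path \<Rightarrow> 'k::zero) \<Rightarrow> path set" where
  "supp f = {x. f x \<noteq> 0}"

definition path_mult :: "(path \<Rightarrow> 'k::field) \<Rightarrow> (path \<Rightarrow> 'k) \<Rightarrow> (path \<Rightarrow> 'k)" where
  "path_mult f g = (\<lambda>r. \<Sum>p\<in>supp f. \<Sum>q\<in>supp g.
      (if composable p q \<and> concat_path p q = r then f p * g q else 0))"

definition path_algebra :: "(path \<Rightarrow> 'k::field) ring" where
  "path_algebra = \<lparr>carrier = {f. finite (supp f) \<and> (\<forall>x. f x \<noteq> 0 \<longrightarrow> valid_path x)},
     mult = path_mult,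
     one = (\<lambda>x. if x = (E1, []) \<or> x = (E2, []) then 1 else 0),
     zero = (\<lambda>x. 0),
     add = (\<lambda>f g x. f x + g x)\<rparr>"

definition bpath :: "path \<Rightarrow> (path \<Rightarrow> 'k::field)" where
  "bpath p = (\<lambda>x. if x = p then 1 else 0)"

definition scal :: "'k::field \<Rightarrow> (path \<Rightarrow> 'k) \<Rightarrow> (path \<Rightarrow> 'k)" where
  "scal c f = (\<lambda>x. c * f x)"

definition rel1 :: "path \<Rightarrow> 'k::field" where
  "rel1 = (\<lambda>x. bpath (E1, [Arr_a, Arr_b]) x - bpath (E1, [Arr_c, Arr_d]) x)"

definition rel2 :: "'k::field \<Rightarrow> path \<Rightarrow> 'k" where
  "rel2 q = (\<lambda>x. bpath (E2, [Arr_b, Arr_a]) x - q * bpath (E2, [Arr_d, Arr_c]) x)"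

definition rel_ideal :: "'k::field \<Rightarrow> (path \<Rightarrow> 'k) set" where
  "rel_ideal q = genideal path_algebra {rel1, rel2 q}"

definition A_alg :: "'k::field \<Rightarrow> (path \<Rightarrow> 'k) set ring" where
  "A_alg q = path_algebra Quot rel_ideal q"

definition A_scalar :: "'k::field \<Rightarrow> 'k \<Rightarrow> (path \<Rightarrow> 'k) set" where
  "A_scalar q c = rel_ideal q +>\<^bsub>path_algebra\<^esub> scal c \<one>\<^bsub>path_algebra\<^esub>"

text \<open>Isomorphism of k-algebras: a ring isomorphism commuting with the structure maps
  from k (equivalently, a k-linear ring isomorphism).\<close>
definition A_iso :: "'k::field \<Rightarrow> 'k \<Rightarrow> bool" where
  "A_iso q p = (\<exists>\<phi>. \<phi> \<in> ring_iso (A_alg q) (A_alg p) \<and> (\<forall>c. \<phi> (A_scalar q c) = A_scalar p c))"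

definition alg_closed :: "'k::field itself \<Rightarrow> bool" where
  "alg_closed _ = (\<forall>f :: 'k poly. degree f > 0 \<longrightarrow> (\<exists>x. poly f x = 0))"

end

theory Submission
  imports Defs
begin

lemma end_from_append[simp]: "end_from v (xs @ ys) = end_from (end_from v xs) ys"
  by (induction xs arbitrary: v) auto

lemma valid_from_append[simp]: "valid_from v (xs @ ys) = (valid_from v xs \<and> valid_from (end_from v xs) ys)"
  by (induction xs arbitrary: v) auto

lemma split_char:
  "(composable p q \<and> concat_path p q = (v, xs)) \<longleftrightarrow>
   (\<exists>i\<le>length xs. p = (v, take i xs) \<and> q = (end_from v (take i xs), drop i xs))"
proof
  assume H: "composable p q \<and> concat_path p q = (v, xs)"
  obtain v1 ys where p: "p = (v1, ys)" by (cases p)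
  obtain v2 zs where q: "q = (v2, zs)" by (cases q)
  from H p q have "v1 = v" "ys @ zs = xs" "v2 = end_from v ys"
    by (auto simp: composable_def concat_path_def path_end_def)
  then show "\<exists>i\<le>length xs. p = (v, take i xs) \<and> q = (end_from v (take i xs), drop i xs)"
    using p q by (intro exI[of _ "length ys"]) auto
next
  assume "\<exists>i\<le>length xs. p = (v, take i xs) \<and> q = (end_from v (take i xs), drop i xs)"
  then show "composable p q \<and> concat_path p q = (v, xs)"
    by (auto simp: composable_def concat_path_def path_end_def)
qed

lemma mult_formula:
  fixes f g :: "path \<Rightarrow> 'k::field"
  assumes ff: "finite (supp f)" and fg: "finite (supp g)"
  shows "path_mult f g (v, xs) = (\<Sum>i\<le>length xs. f (v, take i xs) * g (end_from v (take i xs), drop i xs))"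
proof -
  define F where "F = (\<lambda>(p::path, q::path). if composable p q \<and> concat_path p q = (v, xs) then f p * g q else 0)"
  define T where "T = (\<lambda>i. ((v, take i xs), (end_from v (take i xs), drop i xs))) ` {..length xs}"
  have "path_mult f g (v, xs) = (\<Sum>pq\<in>supp f \<times> supp g. F pq)"
    unfolding path_mult_def F_def by (simp add: sum.cartesian_product)
  also have "\<dots> = (\<Sum>pq\<in>(supp f \<times> supp g) \<union> T. F pq)"
  proof (rule sum.mono_neutral_left)
    show "finite (supp f \<times> supp g \<union> T)" using ff fg by (simp add: T_def)
    show "supp f \<times> supp g \<subseteq> supp f \<times> supp g \<union> T" by blast
    show "\<forall>i\<in>supp f \<times> supp g \<union> T - supp f \<times> supp g. F i = 0"
    proof
      fix pq assume "pq \<in> supp f \<times> supp g \<union> T - supp f \<times> supp g"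
      then obtain p q where "pq = (p, q)" "f p = 0 \<or> g q = 0" by (cases pq) (auto simp: supp_def)
      then show "F pq = 0" by (auto simp: F_def)
    qed
  qed
  also have "\<dots> = (\<Sum>pq\<in>T. F pq)"
  proof (rule sum.mono_neutral_right)
    show "finite (supp f \<times> supp g \<union> T)" using ff fg by (simp add: T_def)
    show "T \<subseteq> supp f \<times> supp g \<union> T" by blast
    show "\<forall>i\<in>supp f \<times> supp g \<union> T - T. F i = 0"
    proof
      fix pq assume A: "pq \<in> supp f \<times> supp g \<union> T - T"
      obtain p q where pq: "pq = (p, q)" by (cases pq)
      show "F pq = 0"
      proof (rule ccontr)
        assume "F pq \<noteq> 0"
        then have "composable p q \<and> concat_path p q = (v, xs)" by (simp add: F_def pq split: if_splits)
        then obtain i where "i \<le> length xs" "p = (v, take i xs)" "q = (end_from v (take i xs), drop i xs)"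
          unfolding split_char by blast
        then have "pq \<in> T" unfolding T_def pq by blast
        with A show False by blast
      qed
    qed
  qed
  also have "\<dots> = (\<Sum>i\<le>length xs. F ((v, take i xs), (end_from v (take i xs), drop i xs)))"
    unfolding T_def
  proof (rule sum.reindex[unfolded comp_def])
    show "inj_on (\<lambda>i. ((v, take i xs), end_from v (take i xs), drop i xs)) {..length xs}"
    proof (rule inj_onI)
      fix i j assume "i \<in> {..length xs}" "j \<in> {..length xs}"
        and "((v, take i xs), end_from v (take i xs), drop i xs) = ((v, take j xs), end_from v (take j xs), drop j xs)"
      then have "length (take i xs) = length (take j xs)" "i \<le> length xs" "j \<le> length xs" by auto
      then show "i = j" by simp
    qed
  qed
  also have "\<dots> = (\<Sum>i\<le>length xs. f (v, take i xs) * g (end_from v (take i xs), drop i xs))"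
    by (rule sum.cong) (simp_all add: F_def composable_def concat_path_def path_end_def)
  finally show ?thesis .
qed

lemma mult_nonzero_E:
  fixes f g :: "path \<Rightarrow> 'k::field"
  assumes "path_mult f g r \<noteq> 0"
  obtains p q where "p \<in> supp f" "q \<in> supp g" "composable p q" "concat_path p q = r"
proof -
  obtain p where p: "p \<in> supp f"
    and h: "(\<Sum>q\<in>supp g. if composable p q \<and> concat_path p q = r then f p * g q else 0) \<noteq> 0"
    using assms unfolding path_mult_def by (rule sum.not_neutral_contains_not_neutral)
  obtain q where "q \<in> supp g" "(if composable p q \<and> concat_path p q = r then f p * g q else 0) \<noteq> 0"
    using h by (rule sum.not_neutral_contains_not_neutral)
  then show ?thesis using p that by (auto split: if_splits)
qed

lemma supp_mult:
  fixes f g :: "path \<Rightarrow> 'k::field"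
  shows "supp (path_mult f g) \<subseteq> (\<lambda>(p, q). concat_path p q) ` (supp f \<times> supp g)"
proof
  fix r assume "r \<in> supp (path_mult f g)"
  then have "path_mult f g r \<noteq> 0" by (simp add: supp_def)
  then obtain p q where "p \<in> supp f" "q \<in> supp g" "composable p q" "concat_path p q = r"
    by (rule mult_nonzero_E)
  then show "r \<in> (\<lambda>(p, q). concat_path p q) ` (supp f \<times> supp g)"
    by (intro image_eqI[of _ _ "(p,q)"]) auto
qed

lemma finite_supp_mult:
  fixes f g :: "path \<Rightarrow> 'k::field"
  assumes "finite (supp f)" "finite (supp g)"
  shows "finite (supp (path_mult f g))"
  by (rule finite_subset[OF supp_mult]) (use assms in auto)

lemma valid_mult:
  fixes f g :: "path \<Rightarrow> 'k::field"
  assumes "\<forall>x. f x \<noteq> 0 \<longrightarrow> valid_path x" "\<forall>x. g x \<noteq> 0 \<longrightarrow> valid_path x"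
    "path_mult f g r \<noteq> 0"
  shows "valid_path r"
proof -
  from assms(3) obtain p q where q: "p \<in> supp f" "q \<in> supp g" "composable p q" "concat_path p q = r"
    by (rule mult_nonzero_E)
  have "valid_path p" using q(1) assms(1) by (cases p) (auto simp: supp_def)
  moreover have "valid_path q" using q(2) assms(2) by (cases q) (auto simp: supp_def)
  ultimately show ?thesis using q
    by (cases p; cases q) (auto simp: valid_path_def composable_def concat_path_def path_end_def)
qed

lemma tri_swap:
  fixes F :: "nat \<Rightarrow> nat \<Rightarrow> 'a::comm_monoid_add"
  shows "(\<Sum>j\<le>n. \<Sum>i\<le>j. F i j) = (\<Sum>i\<le>n. \<Sum>j\<in>{i..n}. F i j)"
proof (induction n)
  case 0 then show ?case by simp
next
  case (Suc n)
  have "(\<Sum>i\<le>Suc n. \<Sum>j\<in>{i..Suc n}. F i j) = (\<Sum>i\<le>Suc n. (\<Sum>j\<in>{i..n}. F i j) + F i (Suc n))"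
    by (rule sum.cong) (auto simp: atLeastAtMostSuc_conv add.commute)
  also have "\<dots> = (\<Sum>i\<le>Suc n. \<Sum>j\<in>{i..n}. F i j) + (\<Sum>i\<le>Suc n. F i (Suc n))"
    by (simp add: sum.distrib)
  also have "(\<Sum>i\<le>Suc n. \<Sum>j\<in>{i..n}. F i j) = (\<Sum>i\<le>n. \<Sum>j\<in>{i..n}. F i j)"
    by simp
  finally show ?case using Suc by (simp add: add.commute)
qed

lemma PA_carrier: "f \<in> carrier (path_algebra :: (path \<Rightarrow> 'k::field) ring) \<longleftrightarrow>
   finite (supp f) \<and> (\<forall>x. f x \<noteq> 0 \<longrightarrow> valid_path x)"
  by (simp add: path_algebra_def)

lemma PA_simps:
  "mult (path_algebra :: (path \<Rightarrow> 'k::field) ring) = path_mult"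
  "add (path_algebra :: (path \<Rightarrow> 'k::field) ring) = (\<lambda>f g x. f x + g x)"
  "zero (path_algebra :: (path \<Rightarrow> 'k::field) ring) = (\<lambda>x. 0)"
  "one (path_algebra :: (path \<Rightarrow> 'k::field) ring) = (\<lambda>x. if x = (E1, []) \<or> x = (E2, []) then 1 else 0)"
  by (simp_all add: path_algebra_def)

lemma supp_add: "supp (\<lambda>x. f x + g x) \<subseteq> supp f \<union> supp (g :: path \<Rightarrow> 'k::field)"
  by (auto simp: supp_def)

lemma vert_or[simp]: "(w = E1 \<and> P \<or> w = E2 \<and> P) = P"
  by (cases w) auto

lemma one_val: "(if (v, ys) = (E1, []) \<or> (v, ys) = (E2, []) then (1::'k::field) else 0) = (if ys = [] then 1 else 0)"
  by (cases v) auto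

lemma mult_assoc_pt:
  fixes f g h :: "path \<Rightarrow> 'k::field"
  assumes ff: "finite (supp f)" and fg: "finite (supp g)" and fh: "finite (supp h)"
  shows "path_mult (path_mult f g) h r = path_mult f (path_mult g h) r"
proof -
  obtain v xs where r: "r = (v, xs)" by (cases r)
  define n where "n = length xs"
  define G where "G = (\<lambda>i j. f (v, take i xs) * g (end_from v (take i xs), drop i (take j xs)) *
       h (end_from v (take j xs), drop j xs))"
  have fgf: "finite (supp (path_mult f g))" "finite (supp (path_mult g h))"
    using finite_supp_mult ff fg fh by blast+
  have "path_mult (path_mult f g) h r = (\<Sum>j\<le>n. path_mult f g (v, take j xs) * h (end_from v (take j xs), drop j xs))"
    unfolding r n_def by (rule mult_formula[OF fgf(1) fh])
  also have "\<dots> = (\<Sum>j\<le>n. \<Sum>i\<le>j. G i j)"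
  proof (rule sum.cong[OF refl])
    fix j assume j: "j \<in> {..n}"
    then have lj: "length (take j xs) = j" by (simp add: n_def)
    have "path_mult f g (v, take j xs) * h (end_from v (take j xs), drop j xs)
       = (\<Sum>i\<le>j. f (v, take i (take j xs)) * g (end_from v (take i (take j xs)), drop i (take j xs))) * h (end_from v (take j xs), drop j xs)"
      using mult_formula[OF ff fg, of v "take j xs"] lj by simp
    also have "\<dots> = (\<Sum>i\<le>j. G i j)"
      unfolding sum_distrib_right G_def by (rule sum.cong) (auto simp: min_def)
    finally show "path_mult f g (v, take j xs) * h (end_from v (take j xs), drop j xs) = (\<Sum>i\<le>j. G i j)" .
  qed
  also have "\<dots> = (\<Sum>i\<le>n. \<Sum>j\<in>{i..n}. G i j)" by (rule tri_swap)
  also have "\<dots> = (\<Sum>i\<le>n. f (v, take i xs) * path_mult g h (end_from v (take i xs), drop i xs))"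
  proof (rule sum.cong[OF refl])
    fix i assume i: "i \<in> {..n}"
    have "path_mult g h (end_from v (take i xs), drop i xs) =
      (\<Sum>k\<le>n - i. g (end_from v (take i xs), take k (drop i xs)) *
          h (end_from (end_from v (take i xs)) (take k (drop i xs)), drop k (drop i xs)))"
      using mult_formula[OF fg fh, of "end_from v (take i xs)" "drop i xs"] by (simp add: n_def)
    also have "\<dots> = (\<Sum>k\<in>{0..n - i}. g (end_from v (take i xs), drop i (take (k + i) xs)) *
          h (end_from v (take (k + i) xs), drop (k + i) xs))"
    proof (rule sum.cong)
      fix k assume "k \<in> {0..n-i}"
      have e1: "take (k + i) xs = take i xs @ take k (drop i xs)"
        by (metis add.commute take_add)
      have e2: "drop i (take (k + i) xs) = take k (drop i xs)" by (simp add: drop_take)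
      have e3: "drop (k + i) xs = drop k (drop i xs)" by (simp add: add.commute)
      show "g (end_from v (take i xs), take k (drop i xs)) *
          h (end_from (end_from v (take i xs)) (take k (drop i xs)), drop k (drop i xs)) =
         g (end_from v (take i xs), drop i (take (k + i) xs)) *
          h (end_from v (take (k + i) xs), drop (k + i) xs)"
        unfolding e2 e3 unfolding e1 by (simp only: end_from_append)
    qed auto
    also have "\<dots> = (\<Sum>j\<in>{0 + i..n - i + i}. g (end_from v (take i xs), drop i (take j xs)) *
          h (end_from v (take j xs), drop j xs))"
      by (rule sum.shift_bounds_cl_nat_ivl[symmetric])
    also have "\<dots> = (\<Sum>j\<in>{i..n}. g (end_from v (take i xs), drop i (take j xs)) *
          h (end_from v (take j xs), drop j xs))"
      using i by simp
    finally show "(\<Sum>j\<in>{i..n}. G i j) = f (v, take i xs) * path_mult g h (end_from v (take i xs), drop i xs)"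
      unfolding G_def by (simp add: sum_distrib_left mult.assoc)
  qed
  also have "\<dots> = path_mult f (path_mult g h) r"
    unfolding r n_def by (rule mult_formula[OF ff fgf(2), symmetric])
  finally show ?thesis .
qed

lemma ring_PA: "ring (path_algebra :: (path \<Rightarrow> 'k::field) ring)"
proof (rule ringI)
  show "abelian_group (path_algebra :: (path \<Rightarrow> 'k::field) ring)"
  proof (rule abelian_groupI)
    fix x y :: "path \<Rightarrow> 'k"
    assume "x \<in> carrier path_algebra" "y \<in> carrier path_algebra"
    then show "x \<oplus>\<^bsub>path_algebra\<^esub> y \<in> carrier path_algebra"
      unfolding PA_carrier PA_simps using supp_add[of x y]
      by (metis (no_types, lifting) add.right_neutral add_0 finite_Un finite_subset)
  next
    show "\<zero>\<^bsub>path_algebra\<^esub> \<in> carrier (path_algebra :: (path \<Rightarrow> 'k::field) ring)"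
      unfolding PA_carrier PA_simps by (simp add: supp_def)
  next
    fix x :: "path \<Rightarrow> 'k"
    assume "x \<in> carrier path_algebra"
    then show "\<exists>y\<in>carrier path_algebra. y \<oplus>\<^bsub>path_algebra\<^esub> x = \<zero>\<^bsub>path_algebra\<^esub>"
      unfolding PA_simps
      by (intro bexI[of _ "\<lambda>p. - x p"]) (auto simp: supp_def PA_carrier)
  qed (auto simp: PA_simps add.assoc add.commute)
next
  show "monoid (path_algebra :: (path \<Rightarrow> 'k::field) ring)"
  proof (rule monoidI)
    fix x y :: "path \<Rightarrow> 'k"
    assume "x \<in> carrier path_algebra" "y \<in> carrier path_algebra"
    then show "x \<otimes>\<^bsub>path_algebra\<^esub> y \<in> carrier path_algebra"
      unfolding PA_carrier PA_simps using finite_supp_mult valid_mult by blast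
  next
    have "supp (\<lambda>x. if x = (E1, []) \<or> x = (E2, []) then (1::'k) else 0) = {(E1, []), (E2, [])}"
      by (auto simp: supp_def)
    then show "\<one>\<^bsub>path_algebra\<^esub> \<in> carrier (path_algebra :: (path \<Rightarrow> 'k::field) ring)"
      unfolding PA_carrier PA_simps by (auto simp: valid_path_def)
    then have f1: "finite (supp (\<one>\<^bsub>path_algebra\<^esub> :: path \<Rightarrow> 'k))" by (simp add: PA_carrier)
    fix x :: "path \<Rightarrow> 'k"
    assume "x \<in> carrier path_algebra"
    then have fx: "finite (supp x)" by (simp add: PA_carrier)
    show "\<one>\<^bsub>path_algebra\<^esub> \<otimes>\<^bsub>path_algebra\<^esub> x = x"
    proof
      fix r :: path
      obtain v xs where r: "r = (v, xs)" by (cases r)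
      have "path_mult (\<one>\<^bsub>path_algebra\<^esub>) x (v, xs) = (\<Sum>i\<le>length xs. (if take i xs = [] then 1 else 0) * x (end_from v (take i xs), drop i xs))"
        using mult_formula[OF f1 fx, of v xs] by (cases v) (simp_all add: PA_simps)
      also have "\<dots> = x (v, xs)"
      proof (cases xs)
        case Nil then show ?thesis by simp
      next
        case (Cons y ys)
        then show ?thesis by (simp add: sum.atMost_Suc_shift del: sum.atMost_Suc)
      qed
      finally show "(\<one>\<^bsub>path_algebra\<^esub> \<otimes>\<^bsub>path_algebra\<^esub> x) r = x r" by (simp add: r PA_simps)
    qed
    show "x \<otimes>\<^bsub>path_algebra\<^esub> \<one>\<^bsub>path_algebra\<^esub> = x"
    proof
      fix r :: path
      obtain v xs where r: "r = (v, xs)" by (cases r)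
      have "path_mult x (\<one>\<^bsub>path_algebra\<^esub>) (v, xs) = (\<Sum>i\<le>length xs. x (v, take i xs) * (if drop i xs = [] then 1 else 0))"
        using mult_formula[OF fx f1, of v xs] by (simp add: PA_simps one_val)
      also have "\<dots> = (\<Sum>i\<in>{length xs}. x (v, take i xs) * (if drop i xs = [] then 1 else 0))"
        by (rule sum.mono_neutral_right) auto
      also have "\<dots> = x (v, xs)" by simp
      finally show "(x \<otimes>\<^bsub>path_algebra\<^esub> \<one>\<^bsub>path_algebra\<^esub>) r = x r" by (simp add: r PA_simps)
    qed
  next
    fix x y z :: "path \<Rightarrow> 'k"
    assume "x \<in> carrier path_algebra" "y \<in> carrier path_algebra" "z \<in> carrier path_algebra"
    then show "x \<otimes>\<^bsub>path_algebra\<^esub> y \<otimes>\<^bsub>path_algebra\<^esub> z = x \<otimes>\<^bsub>path_algebra\<^esub> (y \<otimes>\<^bsub>path_algebra\<^esub> z)"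
      unfolding PA_carrier PA_simps using mult_assoc_pt by blast
  qed
next
  fix x y z :: "path \<Rightarrow> 'k"
  assume A: "x \<in> carrier path_algebra" "y \<in> carrier path_algebra" "z \<in> carrier path_algebra"
  then have fin: "finite (supp x)" "finite (supp y)" "finite (supp z)" "finite (supp (\<lambda>p. x p + y p))"
    using supp_add[of x y] by (auto simp: PA_carrier intro: finite_subset)
  show "(x \<oplus>\<^bsub>path_algebra\<^esub> y) \<otimes>\<^bsub>path_algebra\<^esub> z = x \<otimes>\<^bsub>path_algebra\<^esub> z \<oplus>\<^bsub>path_algebra\<^esub> y \<otimes>\<^bsub>path_algebra\<^esub> z"
  proof
    fix r :: path
    obtain v xs where r: "r = (v, xs)" by (cases r)
    show "((x \<oplus>\<^bsub>path_algebra\<^esub> y) \<otimes>\<^bsub>path_algebra\<^esub> z) r = (x \<otimes>\<^bsub>path_algebra\<^esub> z \<oplus>\<^bsub>path_algebra\<^esub> y \<otimes>\<^bsub>path_algebra\<^esub> z) r"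
      unfolding PA_simps r mult_formula[OF fin(4) fin(3)] mult_formula[OF fin(1) fin(3)] mult_formula[OF fin(2) fin(3)]
      by (simp add: sum.distrib distrib_right)
  qed
  show "z \<otimes>\<^bsub>path_algebra\<^esub> (x \<oplus>\<^bsub>path_algebra\<^esub> y) = z \<otimes>\<^bsub>path_algebra\<^esub> x \<oplus>\<^bsub>path_algebra\<^esub> z \<otimes>\<^bsub>path_algebra\<^esub> y"
  proof
    fix r :: path
    obtain v xs where r: "r = (v, xs)" by (cases r)
    show "(z \<otimes>\<^bsub>path_algebra\<^esub> (x \<oplus>\<^bsub>path_algebra\<^esub> y)) r = (z \<otimes>\<^bsub>path_algebra\<^esub> x \<oplus>\<^bsub>path_algebra\<^esub> z \<otimes>\<^bsub>path_algebra\<^esub> y) r"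
      unfolding PA_simps r mult_formula[OF fin(3) fin(4)] mult_formula[OF fin(3) fin(1)] mult_formula[OF fin(3) fin(2)]
      by (simp add: sum.distrib distrib_left)
  qed
qed

abbreviation PA :: "(path \<Rightarrow> 'k::field) ring" where "PA \<equiv> path_algebra"

lemma PA_finite: "f \<in> carrier (PA :: (path \<Rightarrow> 'k::field) ring) \<Longrightarrow> finite (supp f)"
  by (simp add: PA_carrier)

lemma PA_minus: "x \<in> carrier (PA :: (path \<Rightarrow> 'k::field) ring) \<Longrightarrow> \<ominus>\<^bsub>PA\<^esub> x = (\<lambda>p. - x p)"
proof -
  assume x: "x \<in> carrier (PA :: (path \<Rightarrow> 'k::field) ring)"
  have m: "(\<lambda>p. - x p) \<in> carrier (PA :: (path \<Rightarrow> 'k::field) ring)"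
    using x by (auto simp: PA_carrier supp_def)
  show ?thesis
    by (rule abelian_group.minus_equality[OF ring.is_abelian_group[OF ring_PA] _ x m]) (simp add: PA_simps)
qed

lemma PA_diff: "x \<in> carrier (PA :: (path \<Rightarrow> 'k::field) ring) \<Longrightarrow> y \<in> carrier PA \<Longrightarrow> x \<ominus>\<^bsub>PA\<^esub> y = (\<lambda>p. x p - y p)"
  by (simp add: a_minus_def PA_minus PA_simps)

lemma mult_len0:
  fixes f g :: "path \<Rightarrow> 'k::field"
  assumes "finite (supp f)" "finite (supp g)"
  shows "path_mult f g (v, []) = f (v, []) * g (v, [])"
  using mult_formula[OF assms, of v "[]"] by simp

lemma mult_len1:
  fixes f g :: "path \<Rightarrow> 'k::field"
  assumes "finite (supp f)" "finite (supp g)"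
  shows "path_mult f g (v, [y]) = f (v, []) * g (v, [y]) + f (v, [y]) * g (tgt y, [])"
  using mult_formula[OF assms, of v "[y]"] by simp

lemma mult_len2:
  fixes f g :: "path \<Rightarrow> 'k::field"
  assumes "finite (supp f)" "finite (supp g)"
  shows "path_mult f g (v, [y, z]) = f (v, []) * g (v, [y, z]) + f (v, [y]) * g (tgt y, [z]) + f (v, [y, z]) * g (tgt z, [])"
  using mult_formula[OF assms, of v "[y, z]"] by (simp add: numeral_2_eq_2)

definition good :: "'k::field \<Rightarrow> (path \<Rightarrow> 'k) set" where
  "good p = {f \<in> carrier PA. (\<forall>v. f (v, []) = 0) \<and> (\<forall>v y. f (v, [y]) = 0) \<and>
     f (E1, [Arr_a, Arr_b]) + f (E1, [Arr_c, Arr_d]) = 0 \<and> f (E1, [Arr_a, Arr_d]) = 0 \<and>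
     f (E1, [Arr_c, Arr_b]) = 0 \<and>
     p * f (E2, [Arr_b, Arr_a]) + f (E2, [Arr_d, Arr_c]) = 0 \<and> f (E2, [Arr_b, Arr_c]) = 0 \<and>
     f (E2, [Arr_d, Arr_a]) = 0}"

lemma ideal_good: "ideal (good p) (PA :: (path \<Rightarrow> 'k::field) ring)"
proof (rule idealI[OF ring_PA])
  interpret R: ring "PA :: (path \<Rightarrow> 'k::field) ring" by (rule ring_PA)
  show "subgroup (good p) (add_monoid (PA :: (path \<Rightarrow> 'k::field) ring))"
  proof (rule group.subgroupI[OF R.a_group])
    show "good p \<subseteq> carrier (add_monoid (PA :: (path \<Rightarrow> 'k::field) ring))"
      by (auto simp: good_def)
    have "(\<lambda>x. 0) \<in> good p" using R.zero_closed by (simp add: good_def PA_simps)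
    then show "good p \<noteq> {}" by blast
  next
    fix a assume a: "a \<in> good p"
    then have ac: "a \<in> carrier PA" by (simp add: good_def)
    have "inv\<^bsub>add_monoid PA\<^esub> a = \<ominus>\<^bsub>PA\<^esub> a" by (simp add: a_inv_def)
    also have "\<dots> = (\<lambda>x. - a x)" by (rule PA_minus[OF ac])
    finally show "inv\<^bsub>add_monoid PA\<^esub> a \<in> good p"
      using a R.a_inv_closed[OF ac] PA_minus[OF ac] by (auto simp: good_def algebra_simps) (simp_all add: neg_eq_iff_add_eq_0)
  next
    fix a b assume a: "a \<in> good p" and b: "b \<in> good p"
    then have "a \<oplus>\<^bsub>PA\<^esub> b \<in> carrier PA" by (simp add: good_def)
    then show "a \<otimes>\<^bsub>add_monoid PA\<^esub> b \<in> good p"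
      using a b by (auto simp: good_def PA_simps algebra_simps)
  qed
next
  fix a x assume a: "a \<in> good p" and x: "x \<in> carrier (PA :: (path \<Rightarrow> 'k::field) ring)"
  then have ac: "a \<in> carrier PA" by (simp add: good_def)
  have fa: "finite (supp a)" and fx: "finite (supp x)" using ac x by (simp_all add: PA_carrier)
  have c: "x \<otimes>\<^bsub>PA\<^esub> a \<in> carrier PA" "a \<otimes>\<^bsub>PA\<^esub> x \<in> carrier PA"
    using monoid.m_closed[OF ring.is_monoid[OF ring_PA]] ac x by blast+
  show "x \<otimes>\<^bsub>PA\<^esub> a \<in> good p"
    using c(1) a unfolding good_def PA_simps
    by (simp add: mult_len0[OF fx fa] mult_len1[OF fx fa] mult_len2[OF fx fa] algebra_simps
         flip: distrib_left) (metis distrib_left mult.left_commute mult_zero_right)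
  show "a \<otimes>\<^bsub>PA\<^esub> x \<in> good p"
    using c(2) a unfolding good_def PA_simps
    by (simp add: mult_len0[OF fa fx] mult_len1[OF fa fx] mult_len2[OF fa fx] algebra_simps
         flip: distrib_left) (metis distrib_left mult.left_commute mult_zero_right)
qed

lemma rel1_carrier: "(rel1 :: path \<Rightarrow> 'k::field) \<in> carrier PA"
proof -
  have "supp (rel1 :: path \<Rightarrow> 'k) \<subseteq> {(E1, [Arr_a, Arr_b]), (E1, [Arr_c, Arr_d])}"
    by (auto simp: supp_def rel1_def bpath_def split: if_splits)
  then show ?thesis
    by (auto simp: PA_carrier rel1_def bpath_def valid_path_def intro: finite_subset split: if_splits)
qed

lemma rel2_carrier: "(rel2 p :: path \<Rightarrow> 'k::field) \<in> carrier PA"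
proof -
  have "supp (rel2 p :: path \<Rightarrow> 'k) \<subseteq> {(E2, [Arr_b, Arr_a]), (E2, [Arr_d, Arr_c])}"
    by (auto simp: supp_def rel2_def bpath_def split: if_splits)
  then show ?thesis
    by (auto simp: PA_carrier rel2_def bpath_def valid_path_def intro: finite_subset split: if_splits)
qed

lemma rel_ideal_ideal: "ideal (rel_ideal p) (PA :: (path \<Rightarrow> 'k::field) ring)"
  unfolding rel_ideal_def
  by (rule ring.genideal_ideal[OF ring_PA]) (simp add: rel1_carrier rel2_carrier)

lemma rel_in_ideal: "(rel1 :: path \<Rightarrow> 'k::field) \<in> rel_ideal p" "rel2 p \<in> (rel_ideal p :: (path \<Rightarrow> 'k::field) set)"
  unfolding rel_ideal_def
  using ring.genideal_self[OF ring_PA, of "{rel1, rel2 p}"] rel1_carrier rel2_carrier by auto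

lemma rel_ideal_good: "rel_ideal p \<subseteq> (good p :: (path \<Rightarrow> 'k::field) set)"
  unfolding rel_ideal_def
proof (rule ring.genideal_minimal[OF ring_PA ideal_good])
  show "{rel1, rel2 p} \<subseteq> (good p :: (path \<Rightarrow> 'k::field) set)"
    using rel1_carrier rel2_carrier[of p]
    by (auto simp: good_def rel1_def rel2_def bpath_def)
qed

abbreviation cls :: "'k::field \<Rightarrow> (path \<Rightarrow> 'k) \<Rightarrow> (path \<Rightarrow> 'k) set" where
  "cls p f \<equiv> rel_ideal p +>\<^bsub>PA\<^esub> f"

definition rep :: "(path \<Rightarrow> 'k::field) set \<Rightarrow> path \<Rightarrow> 'k" where
  "rep X = (SOME f. f \<in> X)"

lemma AQ_ring: "ring (A_alg (p :: 'k::field))"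
  unfolding A_alg_def by (rule ideal.quotient_is_ring[OF rel_ideal_ideal])

lemma cls_hom: "cls p \<in> ring_hom PA (A_alg (p :: 'k::field))"
  unfolding A_alg_def by (rule ideal.rcos_ring_hom[OF rel_ideal_ideal])

lemma AQ_carrier: "carrier (A_alg (p :: 'k::field)) = cls p ` carrier PA"
  by (auto simp: A_alg_def FactRing_def A_RCOSETS_def RCOSETS_def a_r_coset_def)

lemma cls_in: "f \<in> carrier PA \<Longrightarrow> cls (p :: 'k::field) f \<in> carrier (A_alg p)"
  by (simp add: AQ_carrier)

lemma cls_self: "f \<in> carrier PA \<Longrightarrow> f \<in> cls (p :: 'k::field) f"
proof -
  assume f: "f \<in> carrier PA"
  interpret I: ideal "rel_ideal p" "PA :: (path \<Rightarrow> 'k) ring" by (rule rel_ideal_ideal)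
  show ?thesis by (rule I.a_rcos_self[OF f])
qed

lemma cls_sub: "f \<in> carrier PA \<Longrightarrow> cls (p :: 'k::field) f \<subseteq> carrier PA"
proof -
  assume f: "f \<in> carrier PA"
  interpret I: ideal "rel_ideal p" "PA :: (path \<Rightarrow> 'k) ring" by (rule rel_ideal_ideal)
  show ?thesis using I.a_rcosets_carrier[of "cls p f"] f
    by (auto simp: A_RCOSETS_def RCOSETS_def a_r_coset_def)
qed

lemma cls_eq_iff:
  assumes f: "f \<in> carrier PA" and g: "g \<in> carrier PA"
  shows "cls (p :: 'k::field) f = cls p g \<longleftrightarrow> (\<lambda>x. f x - g x) \<in> rel_ideal p"
proof -
  interpret I: ideal "rel_ideal p" "PA :: (path \<Rightarrow> 'k) ring" by (rule rel_ideal_ideal)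
  have "cls p f = cls p g \<longleftrightarrow> f \<in> cls p g"
    using I.a_repr_independence'[of f g] I.a_repr_independenceD[of f g] f g by metis
  also have "\<dots> \<longleftrightarrow> f \<ominus>\<^bsub>PA\<^esub> g \<in> rel_ideal p"
    by (rule I.a_rcos_module_minus[OF ring_PA g f])
  finally show ?thesis by (simp add: PA_diff f g)
qed

lemma rep_in: "X \<in> carrier (A_alg (p :: 'k::field)) \<Longrightarrow> rep X \<in> X"
proof -
  assume "X \<in> carrier (A_alg p)"
  then obtain f where f: "f \<in> carrier PA" "X = cls p f" by (auto simp: AQ_carrier)
  show ?thesis unfolding rep_def f(2) using cls_self[OF f(1), of p] by (metis someI)
qed

lemma rep_carrier: "X \<in> carrier (A_alg (p :: 'k::field)) \<Longrightarrow> rep X \<in> carrier PA"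
  using rep_in[of X p] cls_sub[of _ p] by (auto simp: AQ_carrier)

lemma cls_rep: "X \<in> carrier (A_alg (p :: 'k::field)) \<Longrightarrow> cls p (rep X) = X"
proof -
  assume X: "X \<in> carrier (A_alg p)"
  then obtain f where f: "f \<in> carrier PA" "X = cls p f" by (auto simp: AQ_carrier)
  interpret I: ideal "rel_ideal p" "PA :: (path \<Rightarrow> 'k) ring" by (rule rel_ideal_ideal)
  show ?thesis using I.a_repr_independence'[of "rep X" f] rep_in[OF X] f by simp
qed

lemma good_low: "h \<in> good p \<Longrightarrow> length ys \<le> 1 \<Longrightarrow> h (v, ys) = 0"
  by (cases ys) (auto simp: good_def)

lemma eq_low:
  assumes "f \<in> carrier PA" "g \<in> carrier PA" "cls (p :: 'k::field) f = cls p g" "length ys \<le> 1"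
  shows "f (v, ys) = g (v, ys)"
proof -
  have "(\<lambda>x. f x - g x) \<in> good p" using assms cls_eq_iff[OF assms(1,2)] rel_ideal_good[of p] by blast
  then show ?thesis using good_low[of "\<lambda>x. f x - g x" p ys v] assms(4) by simp
qed

definition qfun :: "'k::field \<Rightarrow> (path \<Rightarrow> 'k) \<Rightarrow> 'k \<times> 'k \<times> 'k \<times> 'k \<times> 'k \<times> 'k" where
  "qfun p f = (f (E1, [Arr_a, Arr_b]) + f (E1, [Arr_c, Arr_d]), f (E1, [Arr_a, Arr_d]), f (E1, [Arr_c, Arr_b]),
     p * f (E2, [Arr_b, Arr_a]) + f (E2, [Arr_d, Arr_c]), f (E2, [Arr_b, Arr_c]), f (E2, [Arr_d, Arr_a]))"

lemma eq_qfun: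
  assumes "f \<in> carrier PA" "g \<in> carrier PA" "cls (p :: 'k::field) f = cls p g"
  shows "qfun p f = qfun p g"
proof -
  have "(\<lambda>x. f x - g x) \<in> good p" using assms cls_eq_iff[OF assms(1,2)] rel_ideal_good[of p] by blast
  then show ?thesis by (simp add: good_def qfun_def algebra_simps)
qed

lemma rep_low: "f \<in> carrier PA \<Longrightarrow> length ys \<le> 1 \<Longrightarrow> rep (cls (p::'k::field) f) (v, ys) = f (v, ys)"
  using eq_low[of "rep (cls p f)" f p ys v] rep_carrier[of "cls p f" p] cls_in[of f p] cls_rep[of "cls p f" p]
  by simp

lemma AQ_simps:
  assumes "f \<in> carrier PA" "g \<in> carrier PA"
  shows "cls p f \<otimes>\<^bsub>A_alg (p::'k::field)\<^esub> cls p g = cls p (f \<otimes>\<^bsub>PA\<^esub> g)"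
    "cls p f \<oplus>\<^bsub>A_alg p\<^esub> cls p g = cls p (f \<oplus>\<^bsub>PA\<^esub> g)"
  using ring_hom_mult[OF cls_hom assms] ring_hom_add[OF cls_hom assms] by simp_all

lemma AQ_one: "\<one>\<^bsub>A_alg (p::'k::field)\<^esub> = cls p \<one>\<^bsub>PA\<^esub>"
  using ring_hom_one[OF cls_hom] by (rule sym)

lemma AQ_zero: "\<zero>\<^bsub>A_alg (p::'k::field)\<^esub> = cls p \<zero>\<^bsub>PA\<^esub>"
  using ring_hom_zero[OF cls_hom ring_PA AQ_ring] by (rule sym)

lemma PA_valid: "f \<in> carrier (PA :: (path \<Rightarrow> 'k::field) ring) \<Longrightarrow> f x \<noteq> 0 \<Longrightarrow> valid_path x"
  unfolding PA_carrier by blast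

lemma supp_bpath: "supp (bpath P :: path \<Rightarrow> 'k::field) = {P}"
  by (auto simp: supp_def bpath_def)

lemma bpath_carrier: "valid_path P \<Longrightarrow> (bpath P :: path \<Rightarrow> 'k::field) \<in> carrier PA"
  unfolding PA_carrier supp_bpath by (auto simp: bpath_def split: if_splits)

lemma bpath_mult: "path_mult (bpath P) (bpath Q :: path \<Rightarrow> 'k::field) =
  (if composable P Q then bpath (concat_path P Q) else (\<lambda>x. 0))"
  unfolding path_mult_def supp_bpath by (rule ext) (auto simp: bpath_def)

lemma scal_carrier: "f \<in> carrier PA \<Longrightarrow> scal c f \<in> carrier (PA :: (path \<Rightarrow> 'k::field) ring)"
proof -
  assume f: "f \<in> carrier PA"
  have "supp (scal c f) \<subseteq> supp f" by (auto simp: supp_def scal_def)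
  then show ?thesis using f by (auto simp: PA_carrier scal_def intro: finite_subset)
qed

lemma mult_scal_left:
  fixes f g :: "path \<Rightarrow> 'k::field"
  assumes "f \<in> carrier PA" "g \<in> carrier PA"
  shows "path_mult (scal c f) g = scal c (path_mult f g)"
proof
  fix r :: path
  obtain v xs where r: "r = (v, xs)" by (cases r)
  have fs: "finite (supp (scal c f))" using scal_carrier[OF assms(1)] by (simp add: PA_carrier)
  show "path_mult (scal c f) g r = scal c (path_mult f g) r"
    unfolding r mult_formula[OF fs PA_finite[OF assms(2)]] unfolding scal_def mult_formula[OF PA_finite[OF assms(1)] PA_finite[OF assms(2)]]
    by (simp add: sum_distrib_left mult.assoc)
qed

lemma mult_scal_right:
  fixes f g :: "path \<Rightarrow> 'k::field"
  assumes "f \<in> carrier PA" "g \<in> carrier PA"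
  shows "path_mult f (scal c g) = scal c (path_mult f g)"
proof
  fix r :: path
  obtain v xs where r: "r = (v, xs)" by (cases r)
  have gs: "finite (supp (scal c g))" using scal_carrier[OF assms(2)] by (simp add: PA_carrier)
  show "path_mult f (scal c g) r = scal c (path_mult f g) r"
    unfolding r mult_formula[OF PA_finite[OF assms(1)] gs] unfolding scal_def mult_formula[OF PA_finite[OF assms(1)] PA_finite[OF assms(2)]]
    by (simp add: sum_distrib_left algebra_simps)
qed

lemma one_carrier: "\<one>\<^bsub>PA\<^esub> \<in> carrier (PA :: (path \<Rightarrow> 'k::field) ring)"
  by (rule monoid.one_closed[OF ring.is_monoid[OF ring_PA]])

lemma mult_closed_PA: "f \<in> carrier PA \<Longrightarrow> g \<in> carrier PA \<Longrightarrow> f \<otimes>\<^bsub>PA\<^esub> g \<in> carrier (PA :: (path \<Rightarrow> 'k::field) ring)"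
  by (rule monoid.m_closed[OF ring.is_monoid[OF ring_PA]])

lemma add_closed_PA: "f \<in> carrier PA \<Longrightarrow> g \<in> carrier PA \<Longrightarrow> f \<oplus>\<^bsub>PA\<^esub> g \<in> carrier (PA :: (path \<Rightarrow> 'k::field) ring)"
  by (rule ring.ring_simprules(1)[OF ring_PA])

lemma scal_one_mult: "f \<in> carrier PA \<Longrightarrow> scal c \<one>\<^bsub>PA\<^esub> \<otimes>\<^bsub>PA\<^esub> f = scal c (f :: path \<Rightarrow> 'k::field)"
  using mult_scal_left[OF one_carrier, of f c] monoid.l_one[OF ring.is_monoid[OF ring_PA], of f]
  by (simp add: PA_simps)

lemma mult_scal_one: "f \<in> carrier PA \<Longrightarrow> f \<otimes>\<^bsub>PA\<^esub> scal c \<one>\<^bsub>PA\<^esub> = scal c (f :: path \<Rightarrow> 'k::field)"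
  using mult_scal_right[OF _ one_carrier, of f c] monoid.r_one[OF ring.is_monoid[OF ring_PA], of f]
  by (simp add: PA_simps)

lemma A_scalar_cls: "A_scalar p c = cls (p::'k::field) (scal c \<one>\<^bsub>PA\<^esub>)"
  by (simp add: A_scalar_def)

lemma A_scalar_carrier: "A_scalar p c \<in> carrier (A_alg (p::'k::field))"
  unfolding A_scalar_cls by (rule cls_in[OF scal_carrier[OF one_carrier]])

lemma A_scalar_mult: "f \<in> carrier PA \<Longrightarrow> A_scalar p c \<otimes>\<^bsub>A_alg p\<^esub> cls p f = cls (p::'k::field) (scal c f)"
  unfolding A_scalar_cls by (simp add: AQ_simps scal_carrier one_carrier scal_one_mult)

lemma lin_decomp:
  fixes L :: "(path \<Rightarrow> 'k::field) set \<Rightarrow> 'k"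
  assumes L_add: "\<And>X Y. X \<in> carrier (A_alg q) \<Longrightarrow> Y \<in> carrier (A_alg q) \<Longrightarrow> L (X \<oplus>\<^bsub>A_alg q\<^esub> Y) = L X + L Y"
    and L_scal: "\<And>c X. X \<in> carrier (A_alg q) \<Longrightarrow> L (A_scalar q c \<otimes>\<^bsub>A_alg q\<^esub> X) = c * L X"
    and f: "f \<in> carrier PA"
  shows "L (cls q f) = (\<Sum>s\<in>supp f. f s * L (cls q (bpath s)))"
proof -
  have fin: "finite (supp f)" using f by (simp add: PA_carrier)
  have "\<forall>f. f \<in> carrier PA \<longrightarrow> supp f = S \<longrightarrow> L (cls q f) = (\<Sum>s\<in>S. f s * L (cls q (bpath s)))"
    if "finite S" for S
    using that
  proof (induction S rule: finite_induct)
    case empty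
    show ?case
    proof (intro allI impI)
      fix f :: "path \<Rightarrow> 'k" assume "f \<in> carrier PA" "supp f = {}"
      then have f0: "f = \<zero>\<^bsub>PA\<^esub>" by (auto simp: supp_def PA_simps)
      have z: "\<zero>\<^bsub>A_alg q\<^esub> \<in> carrier (A_alg q)" by (rule ring.ring_simprules(2)[OF AQ_ring])
      have "L (\<zero>\<^bsub>A_alg q\<^esub>) = L (\<zero>\<^bsub>A_alg q\<^esub>) + L (\<zero>\<^bsub>A_alg q\<^esub>)"
        using L_add[OF z z] ring.ring_simprules(15)[OF AQ_ring z] by simp
      then have "L (\<zero>\<^bsub>A_alg q\<^esub>) = 0" by (metis add_cancel_right_right)
      then show "L (cls q f) = (\<Sum>s\<in>{}. f s * L (cls q (bpath s)))"
        by (simp add: f0 AQ_zero)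
    qed
  next
    case (insert s S)
    show ?case
    proof (intro allI impI)
      fix f :: "path \<Rightarrow> 'k" assume fc: "f \<in> carrier PA" and sf: "supp f = insert s S"
      define f' where "f' = f(s := 0)"
      have fs: "f s \<noteq> 0" using sf by (auto simp: supp_def)
      then have vs: "valid_path s" using fc by (rule PA_valid[rotated])
      have sf': "supp f' = S" using sf insert.hyps by (auto simp: supp_def f'_def)
      have f'c: "f' \<in> carrier PA"
        using fc sf' insert.hyps by (auto simp: PA_carrier f'_def)
      have bc: "bpath s \<in> carrier (PA :: (path \<Rightarrow> 'k) ring)" by (rule bpath_carrier[OF vs])
      have fsplit: "f = f' \<oplus>\<^bsub>PA\<^esub> scal (f s) (bpath s)"
        by (rule ext) (auto simp: PA_simps f'_def scal_def bpath_def)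
      have "cls q f = cls q f' \<oplus>\<^bsub>A_alg q\<^esub> (A_scalar q (f s) \<otimes>\<^bsub>A_alg q\<^esub> cls q (bpath s))"
        using fsplit by (simp add: A_scalar_mult[OF bc] AQ_simps f'c scal_carrier[OF bc])
      then have "L (cls q f) = L (cls q f') + f s * L (cls q (bpath s))"
        using L_add[OF cls_in[OF f'c]] L_scal[OF cls_in[OF bc]]
          ring.ring_simprules(5)[OF AQ_ring A_scalar_carrier cls_in[OF bc]] by simp
      also have "L (cls q f') = (\<Sum>s\<in>S. f' s * L (cls q (bpath s)))"
        using insert.IH f'c sf' by blast
      also have "\<dots> = (\<Sum>s\<in>S. f s * L (cls q (bpath s)))"
        using insert.hyps by (intro sum.cong) (auto simp: f'_def)
      finally show "L (cls q f) = (\<Sum>s\<in>insert s S. f s * L (cls q (bpath s)))"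
        using insert.hyps by (simp add: add.commute)
    qed
  qed
  then show ?thesis using fin f by blast
qed

definition ev :: "vert \<Rightarrow> path \<Rightarrow> 'k::field" where "ev v = bpath (v, [])"
definition ar :: "arr \<Rightarrow> path \<Rightarrow> 'k::field" where "ar x = bpath (src x, [x])"

lemma ev_carrier: "(ev v :: path \<Rightarrow> 'k::field) \<in> carrier PA"
  unfolding ev_def by (rule bpath_carrier) (simp add: valid_path_def)

lemma ar_carrier: "(ar x :: path \<Rightarrow> 'k::field) \<in> carrier PA"
  unfolding ar_def by (rule bpath_carrier) (simp add: valid_path_def)

lemma src_ne_tgt: "src x \<noteq> tgt x"
  by (cases x) auto

lemma ev_ar: "ev (src x) \<otimes>\<^bsub>PA\<^esub> ar x = (ar x :: path \<Rightarrow> 'k::field)"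
  by (simp add: ev_def ar_def PA_simps bpath_mult composable_def path_end_def concat_path_def)

lemma ar_ev: "ar x \<otimes>\<^bsub>PA\<^esub> ev (tgt x) = (ar x :: path \<Rightarrow> 'k::field)"
  by (simp add: ev_def ar_def PA_simps bpath_mult composable_def path_end_def concat_path_def)

lemma ev12: "ev E1 \<otimes>\<^bsub>PA\<^esub> ev E2 = (\<zero>\<^bsub>PA\<^esub> :: path \<Rightarrow> 'k::field)"
  by (simp add: ev_def PA_simps bpath_mult composable_def path_end_def concat_path_def)

lemma ev_sum: "ev E1 \<oplus>\<^bsub>PA\<^esub> ev E2 = (\<one>\<^bsub>PA\<^esub> :: path \<Rightarrow> 'k::field)"
  by (rule ext) (auto simp: ev_def PA_simps bpath_def)

lemma bpath_split:
  assumes "valid_path (w, y # ys)"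
  shows "bpath (w, y # ys) = ar y \<otimes>\<^bsub>PA\<^esub> (bpath (tgt y, ys) :: path \<Rightarrow> 'k::field)"
  using assms by (simp add: ar_def PA_simps bpath_mult composable_def path_end_def concat_path_def valid_path_def)

lemma valid_tail: "valid_path (w, y # ys) \<Longrightarrow> valid_path (tgt y, ys)"
  by (simp add: valid_path_def)

locale iso_ctx =
  fixes q p :: "'k::field" and \<Phi> :: "(path \<Rightarrow> 'k) set \<Rightarrow> (path \<Rightarrow> 'k) set"
  assumes iso: "\<Phi> \<in> ring_iso (A_alg q) (A_alg p)"
    and sc: "\<And>c. \<Phi> (A_scalar q c) = A_scalar p c"
begin

abbreviation "Aq \<equiv> A_alg q"
abbreviation "Ap \<equiv> A_alg p"

definition F :: "(path \<Rightarrow> 'k) set \<Rightarrow> path \<Rightarrow> 'k" where "F X = rep (\<Phi> X)"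

lemma hom: "\<Phi> \<in> ring_hom Aq Ap" using iso by (simp add: ring_iso_def)
lemma bij: "bij_betw \<Phi> (carrier Aq) (carrier Ap)" using iso by (simp add: ring_iso_def)

lemma Phi_carrier: "X \<in> carrier Aq \<Longrightarrow> \<Phi> X \<in> carrier Ap"
  using ring_hom_closed[OF hom] .

lemma F_carrier: "X \<in> carrier Aq \<Longrightarrow> F X \<in> carrier PA"
  unfolding F_def by (rule rep_carrier[OF Phi_carrier])

lemma Phi_F: "X \<in> carrier Aq \<Longrightarrow> \<Phi> X = cls p (F X)"
  unfolding F_def by (rule cls_rep[OF Phi_carrier, symmetric])

lemma Phi_mult: "X \<in> carrier Aq \<Longrightarrow> Y \<in> carrier Aq \<Longrightarrow> \<Phi> (X \<otimes>\<^bsub>Aq\<^esub> Y) = cls p (F X \<otimes>\<^bsub>PA\<^esub> F Y)"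
  using ring_hom_mult[OF hom] Phi_F AQ_simps(1)[OF F_carrier F_carrier] by metis

lemma Phi_add: "X \<in> carrier Aq \<Longrightarrow> Y \<in> carrier Aq \<Longrightarrow> \<Phi> (X \<oplus>\<^bsub>Aq\<^esub> Y) = cls p (F X \<oplus>\<^bsub>PA\<^esub> F Y)"
  using ring_hom_add[OF hom] Phi_F AQ_simps(2)[OF F_carrier F_carrier] by metis

lemma Phi_scal: "X \<in> carrier Aq \<Longrightarrow> \<Phi> (A_scalar q c \<otimes>\<^bsub>Aq\<^esub> X) = cls p (scal c (F X))"
proof -
  assume X: "X \<in> carrier Aq"
  have "\<Phi> (A_scalar q c \<otimes>\<^bsub>Aq\<^esub> X) = A_scalar p c \<otimes>\<^bsub>Ap\<^esub> \<Phi> X"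
    using ring_hom_mult[OF hom A_scalar_carrier X] sc by simp
  also have "\<dots> = cls p (scal c (F X))"
    using Phi_F[OF X] A_scalar_mult[OF F_carrier[OF X]] by simp
  finally show ?thesis .
qed

lemma F_mult_low: "X \<in> carrier Aq \<Longrightarrow> Y \<in> carrier Aq \<Longrightarrow> length ys \<le> 1 \<Longrightarrow>
    F (X \<otimes>\<^bsub>Aq\<^esub> Y) (v, ys) = path_mult (F X) (F Y) (v, ys)"
  unfolding F_def[of "X \<otimes>\<^bsub>Aq\<^esub> Y"] Phi_mult
  using rep_low[OF mult_closed_PA[OF F_carrier F_carrier]] by (simp add: PA_simps)

lemma F_add_low: "X \<in> carrier Aq \<Longrightarrow> Y \<in> carrier Aq \<Longrightarrow> length ys \<le> 1 \<Longrightarrow>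
    F (X \<oplus>\<^bsub>Aq\<^esub> Y) (v, ys) = F X (v, ys) + F Y (v, ys)"
  unfolding F_def[of "X \<oplus>\<^bsub>Aq\<^esub> Y"] Phi_add
  using rep_low[OF add_closed_PA[OF F_carrier F_carrier]] by (simp add: PA_simps)

lemma F_scal_low: "X \<in> carrier Aq \<Longrightarrow> length ys \<le> 1 \<Longrightarrow>
    F (A_scalar q c \<otimes>\<^bsub>Aq\<^esub> X) (v, ys) = c * F X (v, ys)"
  unfolding F_def[of "A_scalar q c \<otimes>\<^bsub>Aq\<^esub> X"] Phi_scal
  using rep_low[OF scal_carrier[OF F_carrier]] by (simp add: scal_def)

lemma F_zero_low: "length ys \<le> 1 \<Longrightarrow> F (\<zero>\<^bsub>Aq\<^esub>) (v, ys) = 0"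
proof -
  assume l: "length ys \<le> 1"
  have "\<Phi> (\<zero>\<^bsub>Aq\<^esub>) = \<zero>\<^bsub>Ap\<^esub>" by (rule ring_hom_zero[OF hom AQ_ring AQ_ring])
  then show ?thesis unfolding F_def AQ_zero using rep_low[OF ring.ring_simprules(2)[OF ring_PA] l]
    by (simp add: PA_simps)
qed

lemma F_one_low: "length ys \<le> 1 \<Longrightarrow> F (\<one>\<^bsub>Aq\<^esub>) (v, ys) = (if ys = [] then 1 else 0)"
proof -
  assume l: "length ys \<le> 1"
  have "\<Phi> (\<one>\<^bsub>Aq\<^esub>) = \<one>\<^bsub>Ap\<^esub>" by (rule ring_hom_one[OF hom])
  then have "F (\<one>\<^bsub>Aq\<^esub>) (v, ys) = (\<one>\<^bsub>PA\<^esub> :: path \<Rightarrow> 'k) (v, ys)"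
    unfolding F_def AQ_one by (simp add: rep_low[OF one_carrier l])
  then show ?thesis by (cases v) (auto simp: PA_simps)
qed

definition \<theta> :: "vert \<Rightarrow> (path \<Rightarrow> 'k) set \<Rightarrow> 'k" where "\<theta> v X = F X (v, [])"

lemma theta_mult: "X \<in> carrier Aq \<Longrightarrow> Y \<in> carrier Aq \<Longrightarrow> \<theta> v (X \<otimes>\<^bsub>Aq\<^esub> Y) = \<theta> v X * \<theta> v Y"
  unfolding \<theta>_def using F_mult_low[of X Y "[]" v] mult_len0[OF PA_finite[OF F_carrier] PA_finite[OF F_carrier]]
  by simp

lemma mu_mult: "X \<in> carrier Aq \<Longrightarrow> Y \<in> carrier Aq \<Longrightarrow>
   F (X \<otimes>\<^bsub>Aq\<^esub> Y) (v, [y]) = \<theta> v X * F Y (v, [y]) + F X (v, [y]) * \<theta> (tgt y) Y"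
  unfolding \<theta>_def using F_mult_low[of X Y "[y]" v] mult_len1[OF PA_finite[OF F_carrier] PA_finite[OF F_carrier]]
  by simp

abbreviation "Ev v \<equiv> cls q (ev v)"
abbreviation "Ar x \<equiv> cls q (ar x)"

lemma Ev_carrier: "Ev v \<in> carrier Aq" by (rule cls_in[OF ev_carrier])
lemma Ar_carrier: "Ar x \<in> carrier Aq" by (rule cls_in[OF ar_carrier])

lemma theta_Ev_sum: "\<theta> v (Ev E1) + \<theta> v (Ev E2) = 1"
proof -
  have "Ev E1 \<oplus>\<^bsub>Aq\<^esub> Ev E2 = \<one>\<^bsub>Aq\<^esub>"
    by (simp add: AQ_simps ev_carrier ev_sum AQ_one)
  then show ?thesis
    using F_add_low[OF Ev_carrier[of E1] Ev_carrier[of E2], of "[]" v] F_one_low[of "[]" v] by (simp add: \<theta>_def)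
qed

lemma theta_Ev_prod: "\<theta> v (Ev E1) * \<theta> v (Ev E2) = 0"
proof -
  have "Ev E1 \<otimes>\<^bsub>Aq\<^esub> Ev E2 = \<zero>\<^bsub>Aq\<^esub>"
    by (simp add: AQ_simps ev_carrier ev12 AQ_zero)
  moreover have "\<theta> v (Ev E1 \<otimes>\<^bsub>Aq\<^esub> Ev E2) = \<theta> v (Ev E1) * \<theta> v (Ev E2)"
    by (rule theta_mult[OF Ev_carrier Ev_carrier])
  moreover have "\<theta> v (\<zero>\<^bsub>Aq\<^esub>) = 0" using F_zero_low[of "[]" v] by (simp add: \<theta>_def)
  ultimately show ?thesis by simp
qed

lemma theta_Ar: "\<theta> v (Ar x) = 0"
proof -
  have e: "Ar x = Ev (src x) \<otimes>\<^bsub>Aq\<^esub> (Ar x \<otimes>\<^bsub>Aq\<^esub> Ev (tgt x))"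
    by (simp add: AQ_simps ev_carrier ar_carrier ar_ev ev_ar)
  have "\<theta> v (Ar x) = \<theta> v (Ev (src x)) * (\<theta> v (Ar x) * \<theta> v (Ev (tgt x)))"
    by (subst e) (simp add: theta_mult Ev_carrier Ar_carrier ring.ring_simprules(5)[OF AQ_ring])
  also have "\<dots> = \<theta> v (Ar x) * (\<theta> v (Ev (src x)) * \<theta> v (Ev (tgt x)))" by (simp add: algebra_simps)
  also have "\<theta> v (Ev (src x)) * \<theta> v (Ev (tgt x)) = 0"
    using theta_Ev_prod[of v] src_ne_tgt[of x]
    by (cases "src x"; cases "tgt x") (simp_all add: mult.commute)
  finally show ?thesis by simp
qed

lemma theta_lin:
  "\<And>X Y. X \<in> carrier Aq \<Longrightarrow> Y \<in> carrier Aq \<Longrightarrow> \<theta> v (X \<oplus>\<^bsub>Aq\<^esub> Y) = \<theta> v X + \<theta> v Y"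
  "\<And>c X. X \<in> carrier Aq \<Longrightarrow> \<theta> v (A_scalar q c \<otimes>\<^bsub>Aq\<^esub> X) = c * \<theta> v X"
  unfolding \<theta>_def by (simp_all add: F_add_low F_scal_low)

lemma theta_bpath:
  assumes "valid_path s"
  shows "\<theta> v (cls q (bpath s)) = (if snd s = [] then \<theta> v (Ev (fst s)) else 0)"
proof (cases s)
  case (Pair w ys)
  show ?thesis
  proof (cases ys)
    case Nil then show ?thesis using Pair by (simp add: ev_def)
  next
    case (Cons y zs)
    have vs: "valid_path (w, y # zs)" using assms Pair Cons by simp
    have "cls q (bpath s) = cls q (ar y \<otimes>\<^bsub>PA\<^esub> bpath (tgt y, zs))"
      unfolding Pair Cons bpath_split[OF vs] by (rule refl)
    also have "\<dots> = Ar y \<otimes>\<^bsub>Aq\<^esub> cls q (bpath (tgt y, zs))"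
      by (rule AQ_simps(1)[OF ar_carrier bpath_carrier[OF valid_tail[OF vs]], symmetric])
    finally have "cls q (bpath s) = Ar y \<otimes>\<^bsub>Aq\<^esub> cls q (bpath (tgt y, zs))" .
    then show ?thesis
      using theta_mult[OF Ar_carrier cls_in[OF bpath_carrier[OF valid_tail[OF vs]]]] theta_Ar Pair Cons
      by simp
  qed
qed

lemma theta_char:
  assumes f: "f \<in> carrier PA"
  shows "\<theta> v (cls q f) = f (E1, []) * \<theta> v (Ev E1) + f (E2, []) * \<theta> v (Ev E2)"
proof -
  define g where "g = (\<lambda>s::path. if snd s = [] then \<theta> v (Ev (fst s)) else 0)"
  define B :: "path set" where "B = {(E1, []), (E2, [])}"
  have fin: "finite (supp f)" using f by (simp add: PA_carrier)
  have "\<theta> v (cls q f) = (\<Sum>s\<in>supp f. f s * \<theta> v (cls q (bpath s)))"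
    by (rule lin_decomp[OF theta_lin f])
  also have "\<dots> = (\<Sum>s\<in>supp f. f s * g s)"
    by (rule sum.cong[OF refl]) (simp add: g_def theta_bpath[OF PA_valid[OF f]] supp_def)
  also have "\<dots> = (\<Sum>s\<in>supp f \<union> B. f s * g s)"
    by (rule sum.mono_neutral_left) (use fin in \<open>auto simp: B_def supp_def\<close>)
  also have "\<dots> = (\<Sum>s\<in>B. f s * g s)"
  proof (rule sum.mono_neutral_right)
    show "finite (supp f \<union> B)" using fin by (simp add: B_def)
    show "B \<subseteq> supp f \<union> B" by blast
    show "\<forall>i\<in>supp f \<union> B - B. f i * g i = 0"
    proof
      fix i assume "i \<in> supp f \<union> B - B"
      then have "snd i \<noteq> []" by (cases i; cases "fst i") (auto simp: B_def)
      then show "f i * g i = 0" by (simp add: g_def)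
    qed
  qed
  also have "\<dots> = f (E1, []) * \<theta> v (Ev E1) + f (E2, []) * \<theta> v (Ev E2)"
    by (simp add: B_def g_def)
  finally show ?thesis .
qed

lemma theta_distinct: "\<theta> E1 (Ev E1) \<noteq> \<theta> E2 (Ev E1)"
proof
  assume h: "\<theta> E1 (Ev E1) = \<theta> E2 (Ev E1)"
  have h2: "\<theta> E1 (Ev E2) = \<theta> E2 (Ev E2)"
    using theta_Ev_sum[of E1] theta_Ev_sum[of E2] h by (metis add_left_cancel)
  have Y: "cls p (ev E1) \<in> carrier Ap" by (rule cls_in[OF ev_carrier])
  have "cls p (ev E1) \<in> \<Phi> ` carrier Aq" using bij_betw_imp_surj_on[OF bij] Y by simp
  then obtain X where X: "X \<in> carrier Aq" "\<Phi> X = cls p (ev E1)" by (auto simp del: AQ_carrier)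
  obtain f where f: "f \<in> carrier PA" "X = cls q f" using X(1) by (auto simp: AQ_carrier)
  have "\<theta> E1 X = \<theta> E2 X" using theta_char[OF f(1)] h h2 f(2) by simp
  moreover have "\<theta> E1 X = 1" "\<theta> E2 X = 0"
    unfolding \<theta>_def F_def X(2) using rep_low[OF ev_carrier, of "[]" p]
    by (simp_all add: ev_def bpath_def)
  ultimately show False by simp
qed

end

lemma mult_nocst:
  fixes f g :: "path \<Rightarrow> 'k::field"
  assumes "f \<in> carrier PA" "g \<in> carrier PA" "\<And>v. f (v, []) = 0" "\<And>v. g (v, []) = 0"
  shows "path_mult f g (v, [y, z]) = f (v, [y]) * g (tgt y, [z])"
  using mult_len2[OF PA_finite[OF assms(1)] PA_finite[OF assms(2)]] assms(3,4) by simp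

context iso_ctx
begin

lemma theta_nonempty:
  assumes "valid_path (w, y # ys)"
  shows "\<theta> v (cls q (bpath (w, y # ys))) = 0"
  using theta_bpath[OF assms] by simp

lemma J2:
  assumes G: "G \<in> carrier PA" and low: "\<And>v ys. length ys \<le> 1 \<Longrightarrow> G (v, ys) = 0"
  shows "F (cls q G) (w, [y]) = 0"
proof -
  define L where "L = (\<lambda>X. F X (w, [y]))"
  have "L (cls q G) = (\<Sum>s\<in>supp G. G s * L (cls q (bpath s)))"
  proof (rule lin_decomp[OF _ _ G])
    show "\<And>X Y. X \<in> carrier Aq \<Longrightarrow> Y \<in> carrier Aq \<Longrightarrow> L (X \<oplus>\<^bsub>Aq\<^esub> Y) = L X + L Y"
      unfolding L_def by (simp add: F_add_low)
    show "\<And>c X. X \<in> carrier Aq \<Longrightarrow> L (A_scalar q c \<otimes>\<^bsub>Aq\<^esub> X) = c * L X"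
      unfolding L_def by (simp add: F_scal_low)
  qed
  also have "\<dots> = 0"
  proof (rule sum.neutral, rule ballI)
    fix s assume s: "s \<in> supp G"
    then have Gs: "G s \<noteq> 0" by (simp add: supp_def)
    then have vs: "valid_path s" by (rule PA_valid[OF G])
    obtain u zs where sz: "s = (u, zs)" by (cases s)
    have "\<not> length zs \<le> 1" using low[of zs u] Gs sz by auto
    then obtain z1 z2 zr where zs: "zs = z1 # z2 # zr" by (cases zs; cases "tl zs") auto
    have v1: "valid_path (u, z1 # z2 # zr)" using vs sz zs by simp
    have v2: "valid_path (tgt z1, z2 # zr)" by (rule valid_tail[OF v1])
    have B: "cls q (bpath (tgt z1, z2 # zr)) \<in> carrier Aq" by (rule cls_in[OF bpath_carrier[OF v2]])
    have "cls q (bpath s) = cls q (ar z1 \<otimes>\<^bsub>PA\<^esub> bpath (tgt z1, z2 # zr))"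
      unfolding sz zs bpath_split[OF v1] by (rule refl)
    also have "\<dots> = Ar z1 \<otimes>\<^bsub>Aq\<^esub> cls q (bpath (tgt z1, z2 # zr))"
      by (rule AQ_simps(1)[OF ar_carrier bpath_carrier[OF v2], symmetric])
    finally have e: "cls q (bpath s) = Ar z1 \<otimes>\<^bsub>Aq\<^esub> cls q (bpath (tgt z1, z2 # zr))" .
    have "L (cls q (bpath s)) = 0"
      unfolding L_def e mu_mult[OF Ar_carrier B] theta_Ar theta_nonempty[OF v2] by simp
    then show "G s * L (cls q (bpath s)) = 0" by simp
  qed
  finally show ?thesis by (simp add: L_def)
qed

lemma inv_ctx: "iso_ctx p q (inv_into (carrier Aq) \<Phi>)"
proof
  show "inv_into (carrier Aq) \<Phi> \<in> ring_iso Ap Aq"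
    by (rule ring_iso_set_sym[OF AQ_ring iso])
  fix c
  have "\<Phi> (A_scalar q c) = A_scalar p c" by (rule sc)
  then show "inv_into (carrier Aq) \<Phi> (A_scalar p c) = A_scalar q c"
    using A_scalar_carrier bij_betw_imp_inj_on[OF bij] by (metis inv_into_f_f)
qed

lemma nondeg:
  assumes xx: "x \<noteq> x'"
    and low: "\<And>v ys. length ys \<le> 1 \<Longrightarrow> u1 * F (Ar x) (v, ys) + u2 * F (Ar x') (v, ys) = 0"
  shows "u1 = 0 \<and> u2 = 0"
proof -
  define g where "g = scal u1 (ar x) \<oplus>\<^bsub>PA\<^esub> scal u2 (ar x')"
  define G where "G = scal u1 (F (Ar x)) \<oplus>\<^bsub>PA\<^esub> scal u2 (F (Ar x'))"
  have gc: "g \<in> carrier PA" unfolding g_def by (intro add_closed_PA scal_carrier ar_carrier)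
  have Gc: "G \<in> carrier PA" unfolding G_def by (intro add_closed_PA scal_carrier F_carrier Ar_carrier)
  have X: "cls q g = A_scalar q u1 \<otimes>\<^bsub>Aq\<^esub> Ar x \<oplus>\<^bsub>Aq\<^esub> A_scalar q u2 \<otimes>\<^bsub>Aq\<^esub> Ar x'"
    unfolding g_def by (simp add: A_scalar_mult ar_carrier AQ_simps scal_carrier)
  have Xc: "cls q g \<in> carrier Aq" by (rule cls_in[OF gc])
  have "\<Phi> (cls q g) = cls p G"
  proof -
    have "\<Phi> (cls q g) = cls p (F (A_scalar q u1 \<otimes>\<^bsub>Aq\<^esub> Ar x) \<oplus>\<^bsub>PA\<^esub> F (A_scalar q u2 \<otimes>\<^bsub>Aq\<^esub> Ar x'))"
      unfolding X by (rule Phi_add) (simp_all add: ring.ring_simprules(5)[OF AQ_ring] A_scalar_carrier Ar_carrier)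
    also have "\<dots> = cls p (F (A_scalar q u1 \<otimes>\<^bsub>Aq\<^esub> Ar x)) \<oplus>\<^bsub>Ap\<^esub> cls p (F (A_scalar q u2 \<otimes>\<^bsub>Aq\<^esub> Ar x'))"
      by (rule AQ_simps(2)[symmetric]) (simp_all add: F_carrier ring.ring_simprules(5)[OF AQ_ring] A_scalar_carrier Ar_carrier)
    also have "\<dots> = \<Phi> (A_scalar q u1 \<otimes>\<^bsub>Aq\<^esub> Ar x) \<oplus>\<^bsub>Ap\<^esub> \<Phi> (A_scalar q u2 \<otimes>\<^bsub>Aq\<^esub> Ar x')"
      by (simp add: Phi_F ring.ring_simprules(5)[OF AQ_ring] A_scalar_carrier Ar_carrier)
    also have "\<dots> = cls p (scal u1 (F (Ar x))) \<oplus>\<^bsub>Ap\<^esub> cls p (scal u2 (F (Ar x')))"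
      by (simp add: Phi_scal Ar_carrier)
    also have "\<dots> = cls p G"
      unfolding G_def by (rule AQ_simps(2)) (simp_all add: scal_carrier F_carrier Ar_carrier)
    finally show ?thesis .
  qed
  interpret I: iso_ctx p q "inv_into (carrier Aq) \<Phi>" by (rule inv_ctx)
  have hback: "inv_into (carrier Aq) \<Phi> (cls p G) = cls q g"
    using \<open>\<Phi> (cls q g) = cls p G\<close> Xc bij_betw_imp_inj_on[OF bij] by (metis inv_into_f_f)
  have Glow: "\<And>v ys. length ys \<le> 1 \<Longrightarrow> G (v, ys) = 0"
    using low by (simp add: G_def PA_simps scal_def)
  have "\<And>w y. rep (cls q g) (w, [y]) = 0"
    using I.J2[OF Gc Glow] hback by (simp add: I.F_def)
  then have "\<And>w y. g (w, [y]) = 0" using rep_low[OF gc] by simp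
  from this[of "src x" x] this[of "src x'" x'] xx show ?thesis
    by (simp add: g_def PA_simps scal_def ar_def bpath_def)
qed

lemma qrel:
  assumes "X \<in> carrier Aq" "Y \<in> carrier Aq" "X' \<in> carrier Aq" "Y' \<in> carrier Aq"
    "X \<otimes>\<^bsub>Aq\<^esub> Y = A_scalar q c \<otimes>\<^bsub>Aq\<^esub> (X' \<otimes>\<^bsub>Aq\<^esub> Y')"
  shows "qfun p (F X \<otimes>\<^bsub>PA\<^esub> F Y) = qfun p (scal c (F X' \<otimes>\<^bsub>PA\<^esub> F Y'))"
proof (rule eq_qfun)
  show "F X \<otimes>\<^bsub>PA\<^esub> F Y \<in> carrier PA" using assms by (simp add: mult_closed_PA F_carrier)
  show "scal c (F X' \<otimes>\<^bsub>PA\<^esub> F Y') \<in> carrier PA" using assms by (simp add: scal_carrier mult_closed_PA F_carrier)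
  have XY': "X' \<otimes>\<^bsub>Aq\<^esub> Y' \<in> carrier Aq" using assms by (simp add: ring.ring_simprules(5)[OF AQ_ring])
  have "cls p (F X \<otimes>\<^bsub>PA\<^esub> F Y) = \<Phi> (X \<otimes>\<^bsub>Aq\<^esub> Y)" using assms(1,2) by (simp add: Phi_mult)
  also have "\<dots> = \<Phi> (A_scalar q c \<otimes>\<^bsub>Aq\<^esub> (X' \<otimes>\<^bsub>Aq\<^esub> Y'))" using assms(5) by simp
  also have "\<dots> = A_scalar p c \<otimes>\<^bsub>Ap\<^esub> \<Phi> (X' \<otimes>\<^bsub>Aq\<^esub> Y')"
    using ring_hom_mult[OF hom A_scalar_carrier XY'] sc by simp
  also have "\<dots> = cls p (scal c (F X' \<otimes>\<^bsub>PA\<^esub> F Y'))"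
    using assms by (simp add: Phi_mult A_scalar_mult mult_closed_PA F_carrier)
  finally show "cls p (F X \<otimes>\<^bsub>PA\<^esub> F Y) = cls p (scal c (F X' \<otimes>\<^bsub>PA\<^esub> F Y'))" .
qed

lemma F_Ar_cst: "F (Ar x) (v, []) = 0"
  using theta_Ar by (simp add: \<theta>_def)

lemma F_Ar_vanish: "F (Ar x) (v, [y]) = \<theta> v (Ev (src x)) * \<theta> (tgt y) (Ev (tgt x)) * F (Ar x) (v, [y])"
proof -
  have e: "Ar x = Ev (src x) \<otimes>\<^bsub>Aq\<^esub> (Ar x \<otimes>\<^bsub>Aq\<^esub> Ev (tgt x))"
    by (simp add: AQ_simps ev_carrier ar_carrier ar_ev ev_ar)
  have c: "Ar x \<otimes>\<^bsub>Aq\<^esub> Ev (tgt x) \<in> carrier Aq"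
    by (simp add: ring.ring_simprules(5)[OF AQ_ring] Ar_carrier Ev_carrier)
  have "F (Ar x) (v, [y]) = F (Ev (src x) \<otimes>\<^bsub>Aq\<^esub> (Ar x \<otimes>\<^bsub>Aq\<^esub> Ev (tgt x))) (v, [y])"
    using e by simp
  also have "\<dots> = \<theta> v (Ev (src x)) * F (Ar x \<otimes>\<^bsub>Aq\<^esub> Ev (tgt x)) (v, [y]) +
       F (Ev (src x)) (v, [y]) * \<theta> (tgt y) (Ar x \<otimes>\<^bsub>Aq\<^esub> Ev (tgt x))"
    by (rule mu_mult[OF Ev_carrier c])
  also have "\<theta> (tgt y) (Ar x \<otimes>\<^bsub>Aq\<^esub> Ev (tgt x)) = 0"
    by (simp add: theta_mult Ar_carrier Ev_carrier theta_Ar)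
  also have "F (Ar x \<otimes>\<^bsub>Aq\<^esub> Ev (tgt x)) (v, [y]) = \<theta> v (Ar x) * F (Ev (tgt x)) (v, [y]) + F (Ar x) (v, [y]) * \<theta> (tgt y) (Ev (tgt x))"
    by (rule mu_mult[OF Ar_carrier Ev_carrier])
  finally show ?thesis by (simp add: theta_Ar algebra_simps)
qed

lemma F_Ar_invalid: "src y \<noteq> v \<Longrightarrow> F (Ar x) (v, [y]) = 0"
  using PA_valid[OF F_carrier[OF Ar_carrier], of x "(v, [y])"] by (auto simp: valid_path_def)

end

lemma algA:
  fixes p q m11 m12 m21 m22 n11 n12 n21 n22 :: "'k::field"
  assumes e1: "m11*n11 + m12*n12 = m21*n21 + m22*n22"
    and e2: "m11*n12 = m21*n22" and e3: "m12*n11 = m22*n21"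
    and e4: "p*(n11*m11) + n12*m12 = q*(p*(n21*m21) + n22*m22)"
    and e5: "n11*m12 = q*(n21*m22)" and e6: "n12*m11 = q*(n22*m21)"
    and dM: "m11*m22 - m12*m21 \<noteq> 0" and dN: "n11*n22 - n12*n21 \<noteq> 0"
    and p: "p \<noteq> 0" and q: "q \<noteq> 0"
  shows "p = q \<or> p = inverse q"
proof -
  define x1 where "x1 = m11*n11 - m21*n21"
  define y1 where "y1 = n11*m11 - q*n21*m21"
  define dm where "dm = m11*m22 - m12*m21"
  define dn where "dn = n11*n22 - n12*n21"
  have x2: "m12*n12 - m22*n22 = - x1" using e1 unfolding x1_def by (simp add: algebra_simps)
  have y2: "n12*m12 - q*n22*m22 = - p * y1"
  proof -
    have "n12*m12 - q*n22*m22 - (- p * y1) = (p*(n11*m11) + n12*m12) - q*(p*(n21*m21) + n22*m22)"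
      unfolding y1_def by (simp add: algebra_simps)
    also have "\<dots> = 0" using e4 by simp
    finally show ?thesis by (simp only: right_minus_eq)
  qed
  have i: "x1 * x1 = dm * dn"
    using e2 e3 x2 unfolding x1_def dm_def dn_def by Groebner_Basis.algebra
  have ii: "dm * (x1*(1+q) - y1*(1+p)) = 0"
    using e1 e2 e3 e4 e5 e6 x2 y2 unfolding x1_def y1_def dm_def by Groebner_Basis.algebra
  have iii: "dm * dm * (q*x1*x1 - p*y1*y1) = 0"
    using e1 e2 e3 e4 e5 e6 x2 y2 unfolding x1_def y1_def dm_def by Groebner_Basis.algebra
  have dm0: "dm \<noteq> 0" and dn0: "dn \<noteq> 0" using dM dN by (simp_all add: dm_def dn_def)
  have x10: "x1 \<noteq> 0" using i dm0 dn0 by auto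
  have t: "x1*(1+q) = y1*(1+p)" using ii dm0 by simp
  have d: "q*x1*x1 = p*y1*y1" using iii dm0 by simp
  have "x1 * x1 * (q*(1+p)*(1+p) - p*(1+q)*(1+q)) = 0"
  proof -
    have "x1 * x1 * (q*(1+p)*(1+p) - p*(1+q)*(1+q)) = (q*x1*x1)*(1+p)*(1+p) - p*((x1*(1+q))*(x1*(1+q)))"
      by Groebner_Basis.algebra
    also have "\<dots> = (p*y1*y1)*(1+p)*(1+p) - p*((y1*(1+p))*(y1*(1+p)))" by (simp only: t d)
    also have "\<dots> = 0" by Groebner_Basis.algebra
    finally show ?thesis .
  qed
  then have "q*(1+p)*(1+p) - p*(1+q)*(1+q) = 0" using x10 by simp
  then have "(p - q) * (p * q - 1) = 0" by Groebner_Basis.algebra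
  then have "p = q \<or> p * q = 1" by simp
  then show ?thesis using q by (auto simp: field_simps)
qed

lemma algB:
  fixes p q m11 m12 m21 m22 n11 n12 n21 n22 :: "'k::field"
  assumes e1: "p*(m11*n11 - m21*n21) + (m12*n12 - m22*n22) = 0"
    and e2: "m11*n12 = m21*n22" and e3: "m12*n11 = m22*n21"
    and e4: "n11*m11 + n12*m12 = q*(n21*m21 + n22*m22)"
    and e5: "n11*m12 = q*(n21*m22)" and e6: "n12*m11 = q*(n22*m21)"
    and dM: "m11*m22 - m12*m21 \<noteq> 0" and dN: "n11*n22 - n12*n21 \<noteq> 0"
    and p: "p \<noteq> 0" and q: "q \<noteq> 0"
  shows "p = q \<or> p = inverse q"
proof -
  define x1 where "x1 = m11*n11 - m21*n21"
  define y1 where "y1 = n11*m11 - q*n21*m21"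
  define dm where "dm = m11*m22 - m12*m21"
  define dn where "dn = n11*n22 - n12*n21"
  have x2: "m12*n12 - m22*n22 = - p * x1" using e1 unfolding x1_def by (simp add: algebra_simps eq_neg_iff_add_eq_0)
  have y2: "n12*m12 - q*n22*m22 = - y1"
  proof -
    have "n12*m12 - q*n22*m22 - (- y1) = (n11*m11 + n12*m12) - q*(n21*m21 + n22*m22)"
      unfolding y1_def by (simp add: algebra_simps)
    also have "\<dots> = 0" using e4 by simp
    finally show ?thesis by (simp only: right_minus_eq)
  qed
  have i: "p * x1 * x1 = dm * dn"
    using e2 e3 x2 unfolding x1_def dm_def dn_def by Groebner_Basis.algebra
  have ii: "dm * (p*x1*(1+q) - y1*(1+p)) = 0"
    using e1 e2 e3 e4 e5 e6 x2 y2 unfolding x1_def y1_def dm_def by Groebner_Basis.algebra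
  have iii: "y1 * y1 = q * dm * dn"
    using e1 e2 e3 e4 e5 e6 x2 y2 unfolding x1_def y1_def dm_def dn_def by Groebner_Basis.algebra
  have dm0: "dm \<noteq> 0" and dn0: "dn \<noteq> 0" using dM dN by (simp_all add: dm_def dn_def)
  have x10: "x1 \<noteq> 0" using i dm0 dn0 by auto
  have t: "p*x1*(1+q) = y1*(1+p)" using ii dm0 by simp
  have d: "y1*y1 = q*p*x1*x1" using iii i by (simp add: mult.assoc)
  have "p*x1 * x1 * (q*(1+p)*(1+p) - p*(1+q)*(1+q)) = 0"
  proof -
    have "p*x1 * x1 * (q*(1+p)*(1+p) - p*(1+q)*(1+q)) = (q*p*x1*x1)*(1+p)*(1+p) - ((p*x1*(1+q))*(p*x1*(1+q)))"
      by Groebner_Basis.algebra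
    also have "\<dots> = (y1*y1)*(1+p)*(1+p) - ((y1*(1+p))*(y1*(1+p)))" by (simp only: t d)
    also have "\<dots> = 0" by Groebner_Basis.algebra
    finally show ?thesis .
  qed
  then have "q*(1+p)*(1+p) - p*(1+q)*(1+q) = 0" using x10 p by simp
  then have "(p - q) * (p * q - 1) = 0" by Groebner_Basis.algebra
  then have "p = q \<or> p * q = 1" by simp
  then show ?thesis using q by (auto simp: field_simps)
qed

lemma det_nz:
  fixes m11 m12 m21 m22 :: "'k::field"
  assumes "\<And>u1 u2. u1*m11 + u2*m21 = 0 \<Longrightarrow> u1*m12 + u2*m22 = 0 \<Longrightarrow> u1 = 0 \<and> u2 = 0"
  shows "m11*m22 - m12*m21 \<noteq> 0"
proof
  assume d: "m11*m22 - m12*m21 = 0"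
  have A: "m21 = 0 \<and> m11 = 0" using assms[of m21 "- m11"] d by (simp add: algebra_simps)
  have B: "m22 = 0 \<and> m12 = 0" using assms[of m22 "- m12"] d by (simp add: algebra_simps)
  show False using assms[of 1 0] A B by simp
qed


lemma ar_ar: "tgt x = src y \<Longrightarrow> cls q (ar x) \<otimes>\<^bsub>A_alg q\<^esub> cls q (ar y) = cls (q::'k::field) (bpath (src x, [x, y]))"
  unfolding AQ_simps(1)[OF ar_carrier ar_carrier]
  by (simp add: PA_simps ar_def bpath_mult composable_def path_end_def concat_path_def)

lemma len_le1: "length ys \<le> 1 \<Longrightarrow> ys = [] \<or> (\<exists>y. ys = [y])"
  by (cases ys) auto

context iso_ctx
begin

abbreviation "Fv x v y \<equiv> F (Ar x) (v, [y])"

lemma R1: "qfun p (F (Ar Arr_a) \<otimes>\<^bsub>PA\<^esub> F (Ar Arr_b)) = qfun p (scal 1 (F (Ar Arr_c) \<otimes>\<^bsub>PA\<^esub> F (Ar Arr_d)))"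
proof (rule qrel[OF Ar_carrier Ar_carrier Ar_carrier Ar_carrier])
  have vc: "valid_path (E1, [Arr_c, Arr_d])" by (simp add: valid_path_def)
  have "Ar Arr_a \<otimes>\<^bsub>Aq\<^esub> Ar Arr_b = cls q (bpath (E1, [Arr_a, Arr_b]))" by (simp add: ar_ar)
  also have "\<dots> = cls q (scal 1 (bpath (E1, [Arr_c, Arr_d])))"
  proof (subst cls_eq_iff)
    show "bpath (E1, [Arr_a, Arr_b]) \<in> carrier PA" by (rule bpath_carrier) (simp add: valid_path_def)
    show "scal 1 (bpath (E1, [Arr_c, Arr_d])) \<in> carrier PA" by (rule scal_carrier[OF bpath_carrier[OF vc]])
    have "(\<lambda>x. bpath (E1, [Arr_a, Arr_b]) x - scal 1 (bpath (E1, [Arr_c, Arr_d])) x) = rel1"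
      by (simp add: rel1_def scal_def)
    then show "(\<lambda>x. bpath (E1, [Arr_a, Arr_b]) x - scal 1 (bpath (E1, [Arr_c, Arr_d])) x) \<in> rel_ideal q"
      using rel_in_ideal(1)[of q] by metis
  qed
  also have "\<dots> = A_scalar q 1 \<otimes>\<^bsub>Aq\<^esub> (Ar Arr_c \<otimes>\<^bsub>Aq\<^esub> Ar Arr_d)"
    by (simp add: ar_ar A_scalar_mult[OF bpath_carrier[OF vc]])
  finally show "Ar Arr_a \<otimes>\<^bsub>Aq\<^esub> Ar Arr_b = A_scalar q 1 \<otimes>\<^bsub>Aq\<^esub> (Ar Arr_c \<otimes>\<^bsub>Aq\<^esub> Ar Arr_d)" .
qed

lemma R2: "qfun p (F (Ar Arr_b) \<otimes>\<^bsub>PA\<^esub> F (Ar Arr_a)) = qfun p (scal q (F (Ar Arr_d) \<otimes>\<^bsub>PA\<^esub> F (Ar Arr_c)))"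
proof (rule qrel[OF Ar_carrier Ar_carrier Ar_carrier Ar_carrier])
  have vc: "valid_path (E2, [Arr_d, Arr_c])" by (simp add: valid_path_def)
  have "Ar Arr_b \<otimes>\<^bsub>Aq\<^esub> Ar Arr_a = cls q (bpath (E2, [Arr_b, Arr_a]))" by (simp add: ar_ar)
  also have "\<dots> = cls q (scal q (bpath (E2, [Arr_d, Arr_c])))"
  proof (subst cls_eq_iff)
    show "bpath (E2, [Arr_b, Arr_a]) \<in> carrier PA" by (rule bpath_carrier) (simp add: valid_path_def)
    show "scal q (bpath (E2, [Arr_d, Arr_c])) \<in> carrier PA" by (rule scal_carrier[OF bpath_carrier[OF vc]])
    have "(\<lambda>x. bpath (E2, [Arr_b, Arr_a]) x - scal q (bpath (E2, [Arr_d, Arr_c])) x) = rel2 q"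
      by (simp add: rel2_def scal_def)
    then show "(\<lambda>x. bpath (E2, [Arr_b, Arr_a]) x - scal q (bpath (E2, [Arr_d, Arr_c])) x) \<in> rel_ideal q"
      using rel_in_ideal(2)[of q] by metis
  qed
  also have "\<dots> = A_scalar q q \<otimes>\<^bsub>Aq\<^esub> (Ar Arr_d \<otimes>\<^bsub>Aq\<^esub> Ar Arr_c)"
    by (simp add: ar_ar A_scalar_mult[OF bpath_carrier[OF vc]])
  finally show "Ar Arr_b \<otimes>\<^bsub>Aq\<^esub> Ar Arr_a = A_scalar q q \<otimes>\<^bsub>Aq\<^esub> (Ar Arr_d \<otimes>\<^bsub>Aq\<^esub> Ar Arr_c)" .
qed

lemma prod_val: "(F (Ar x) \<otimes>\<^bsub>PA\<^esub> F (Ar x')) (v, [y, z]) = Fv x v y * F (Ar x') (tgt y, [z])"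
  unfolding PA_simps by (rule mult_nocst[OF F_carrier[OF Ar_carrier] F_carrier[OF Ar_carrier] F_Ar_cst F_Ar_cst])

lemma eqs:
  "Fv Arr_a E1 Arr_a * Fv Arr_b E2 Arr_b + Fv Arr_a E1 Arr_c * Fv Arr_b E2 Arr_d =
   Fv Arr_c E1 Arr_a * Fv Arr_d E2 Arr_b + Fv Arr_c E1 Arr_c * Fv Arr_d E2 Arr_d"
  "Fv Arr_a E1 Arr_a * Fv Arr_b E2 Arr_d = Fv Arr_c E1 Arr_a * Fv Arr_d E2 Arr_d"
  "Fv Arr_a E1 Arr_c * Fv Arr_b E2 Arr_b = Fv Arr_c E1 Arr_c * Fv Arr_d E2 Arr_b"
  "p * (Fv Arr_a E2 Arr_b * Fv Arr_b E1 Arr_a) + Fv Arr_a E2 Arr_d * Fv Arr_b E1 Arr_c =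
   p * (Fv Arr_c E2 Arr_b * Fv Arr_d E1 Arr_a) + Fv Arr_c E2 Arr_d * Fv Arr_d E1 Arr_c"
  "Fv Arr_a E2 Arr_b * Fv Arr_b E1 Arr_c = Fv Arr_c E2 Arr_b * Fv Arr_d E1 Arr_c"
  "Fv Arr_a E2 Arr_d * Fv Arr_b E1 Arr_a = Fv Arr_c E2 Arr_d * Fv Arr_d E1 Arr_a"
  "Fv Arr_b E1 Arr_a * Fv Arr_a E2 Arr_b + Fv Arr_b E1 Arr_c * Fv Arr_a E2 Arr_d =
   q * (Fv Arr_d E1 Arr_a * Fv Arr_c E2 Arr_b + Fv Arr_d E1 Arr_c * Fv Arr_c E2 Arr_d)"
  "Fv Arr_b E1 Arr_a * Fv Arr_a E2 Arr_d = q * (Fv Arr_d E1 Arr_a * Fv Arr_c E2 Arr_d)"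
  "Fv Arr_b E1 Arr_c * Fv Arr_a E2 Arr_b = q * (Fv Arr_d E1 Arr_c * Fv Arr_c E2 Arr_b)"
  "p * (Fv Arr_b E2 Arr_b * Fv Arr_a E1 Arr_a) + Fv Arr_b E2 Arr_d * Fv Arr_a E1 Arr_c =
   q * (p * (Fv Arr_d E2 Arr_b * Fv Arr_c E1 Arr_a) + Fv Arr_d E2 Arr_d * Fv Arr_c E1 Arr_c)"
  "Fv Arr_b E2 Arr_b * Fv Arr_a E1 Arr_c = q * (Fv Arr_d E2 Arr_b * Fv Arr_c E1 Arr_c)"
  "Fv Arr_b E2 Arr_d * Fv Arr_a E1 Arr_a = q * (Fv Arr_d E2 Arr_d * Fv Arr_c E1 Arr_a)"
  using R1 R2 unfolding qfun_def scal_def prod_val prod.inject by (simp_all add: algebra_simps)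


lemma nondeg2:
  assumes xx: "x \<noteq> x'" and v12: "v1 \<noteq> v2"
    and h1: "\<And>y. u1 * Fv x v1 y + u2 * Fv x' v1 y = 0"
    and h2: "\<And>y. Fv x v2 y = 0" "\<And>y. Fv x' v2 y = 0"
  shows "u1 = 0 \<and> u2 = 0"
proof (rule nondeg[OF xx])
  fix v ys assume "length (ys::arr list) \<le> 1"
  then consider "ys = []" | y where "ys = [y]" using len_le1 by blast
  then show "u1 * F (Ar x) (v, ys) + u2 * F (Ar x') (v, ys) = 0"
  proof cases
    case 1 then show ?thesis by (simp add: F_Ar_cst)
  next
    case 2
    have "v = v1 \<or> v = v2" using v12 by (cases v; cases v1; cases v2) auto
    then show ?thesis using h1 h2 2 by auto
  qed
qed

lemma theta01: "\<theta> v (Ev E1) = 0 \<or> \<theta> v (Ev E1) = 1"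
proof -
  have "\<theta> v (Ev E2) = 1 - \<theta> v (Ev E1)" using theta_Ev_sum[of v] by (simp add: eq_diff_eq add.commute)
  then have "\<theta> v (Ev E1) * (1 - \<theta> v (Ev E1)) = 0" using theta_Ev_prod[of v] by simp
  then show ?thesis by simp
qed

lemma theta_E2: "\<theta> v (Ev E2) = 1 - \<theta> v (Ev E1)"
  using theta_Ev_sum[of v] by (simp add: eq_diff_eq add.commute)

lemma forward_ctx:
  assumes p: "p \<noteq> 0" and q: "q \<noteq> 0"
  shows "p = q \<or> p = inverse q"
proof -
  consider (A) "\<theta> E1 (Ev E1) = 1" "\<theta> E2 (Ev E1) = 0" | (B) "\<theta> E1 (Ev E1) = 0" "\<theta> E2 (Ev E1) = 1"
    using theta01[of E1] theta01[of E2] theta_distinct by auto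
  then show ?thesis
  proof cases
    case A
    have t: "\<theta> E2 (Ev E1) = 0" "\<theta> E1 (Ev E2) = 0" using A theta_E2[of E1] by simp_all
    have vanA: "\<And>x y. src x = E1 \<Longrightarrow> Fv x E2 y = 0"
      using F_Ar_vanish t by (metis mult_zero_left)
    have vanB: "\<And>x y. src x = E2 \<Longrightarrow> Fv x E1 y = 0"
      using F_Ar_vanish t by (metis mult_zero_left)
    have dM: "Fv Arr_a E1 Arr_a * Fv Arr_c E1 Arr_c - Fv Arr_a E1 Arr_c * Fv Arr_c E1 Arr_a \<noteq> 0"
    proof (rule det_nz)
      fix u1 u2 assume h: "u1 * Fv Arr_a E1 Arr_a + u2 * Fv Arr_c E1 Arr_a = 0"
        "u1 * Fv Arr_a E1 Arr_c + u2 * Fv Arr_c E1 Arr_c = 0"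
      show "u1 = 0 \<and> u2 = 0"
      proof (rule nondeg2[of Arr_a Arr_c E1 E2])
        fix y show "u1 * Fv Arr_a E1 y + u2 * Fv Arr_c E1 y = 0"
          using h by (cases y) (simp_all add: F_Ar_invalid)
      qed (simp_all add: vanA)
    qed
    have dN: "Fv Arr_b E2 Arr_b * Fv Arr_d E2 Arr_d - Fv Arr_b E2 Arr_d * Fv Arr_d E2 Arr_b \<noteq> 0"
    proof (rule det_nz)
      fix u1 u2 assume h: "u1 * Fv Arr_b E2 Arr_b + u2 * Fv Arr_d E2 Arr_b = 0"
        "u1 * Fv Arr_b E2 Arr_d + u2 * Fv Arr_d E2 Arr_d = 0"
      show "u1 = 0 \<and> u2 = 0"
      proof (rule nondeg2[of Arr_b Arr_d E2 E1])
        fix y show "u1 * Fv Arr_b E2 y + u2 * Fv Arr_d E2 y = 0"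
          using h by (cases y) (simp_all add: F_Ar_invalid)
      qed (simp_all add: vanB)
    qed
    show ?thesis
      by (rule algA[OF eqs(1) eqs(2) eqs(3) eqs(10) eqs(11) eqs(12) dM dN p q])
  next
    case B
    have t: "\<theta> E1 (Ev E1) = 0" "\<theta> E2 (Ev E2) = 0" using B theta_E2[of E2] by simp_all
    have vanA: "\<And>x y. src x = E1 \<Longrightarrow> Fv x E1 y = 0"
      using F_Ar_vanish t by (metis mult_zero_left)
    have vanB: "\<And>x y. src x = E2 \<Longrightarrow> Fv x E2 y = 0"
      using F_Ar_vanish t by (metis mult_zero_left)
    have dM: "Fv Arr_a E2 Arr_b * Fv Arr_c E2 Arr_d - Fv Arr_a E2 Arr_d * Fv Arr_c E2 Arr_b \<noteq> 0"
    proof (rule det_nz)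
      fix u1 u2 assume h: "u1 * Fv Arr_a E2 Arr_b + u2 * Fv Arr_c E2 Arr_b = 0"
        "u1 * Fv Arr_a E2 Arr_d + u2 * Fv Arr_c E2 Arr_d = 0"
      show "u1 = 0 \<and> u2 = 0"
      proof (rule nondeg2[of Arr_a Arr_c E2 E1])
        fix y show "u1 * Fv Arr_a E2 y + u2 * Fv Arr_c E2 y = 0"
          using h by (cases y) (simp_all add: F_Ar_invalid)
      qed (simp_all add: vanA)
    qed
    have dN: "Fv Arr_b E1 Arr_a * Fv Arr_d E1 Arr_c - Fv Arr_b E1 Arr_c * Fv Arr_d E1 Arr_a \<noteq> 0"
    proof (rule det_nz)
      fix u1 u2 assume h: "u1 * Fv Arr_b E1 Arr_a + u2 * Fv Arr_d E1 Arr_a = 0"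
        "u1 * Fv Arr_b E1 Arr_c + u2 * Fv Arr_d E1 Arr_c = 0"
      show "u1 = 0 \<and> u2 = 0"
      proof (rule nondeg2[of Arr_b Arr_d E1 E2])
        fix y show "u1 * Fv Arr_b E1 y + u2 * Fv Arr_d E1 y = 0"
          using h by (cases y) (simp_all add: F_Ar_invalid)
      qed (simp_all add: vanB)
    qed
    have e1: "p * (Fv Arr_a E2 Arr_b * Fv Arr_b E1 Arr_a - Fv Arr_c E2 Arr_b * Fv Arr_d E1 Arr_a) +
       (Fv Arr_a E2 Arr_d * Fv Arr_b E1 Arr_c - Fv Arr_c E2 Arr_d * Fv Arr_d E1 Arr_c) = 0"
      using eqs(4) by Groebner_Basis.algebra
    show ?thesis
      by (rule algB[OF e1 eqs(5) eqs(6) eqs(7) eqs(8) eqs(9) dM dN p q])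
  qed
qed

end

lemma forward:
  fixes p q :: "'k::field"
  assumes "p \<noteq> 0" "q \<noteq> 0" "A_iso q p"
  shows "p = q \<or> p = inverse q"
proof -
  obtain \<Phi> where "\<Phi> \<in> ring_iso (A_alg q) (A_alg p)" "\<forall>c. \<Phi> (A_scalar q c) = A_scalar p c"
    using assms(3) by (auto simp: A_iso_def)
  then interpret iso_ctx q p \<Phi> by unfold_locales auto
  show ?thesis by (rule forward_ctx[OF assms(1,2)])
qed

fun sv :: "vert \<Rightarrow> vert" where "sv E1 = E2" | "sv E2 = E1"
fun sa :: "arr \<Rightarrow> arr" where
  "sa Arr_a = Arr_b" | "sa Arr_b = Arr_a" | "sa Arr_c = Arr_d" | "sa Arr_d = Arr_c"

definition swp :: "path \<Rightarrow> path" where "swp r = (sv (fst r), map sa (snd r))"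
definition cnt :: "arr \<Rightarrow> arr list \<Rightarrow> nat" where "cnt x xs = length (filter (\<lambda>y. y = x) xs)"

definition sig :: "'k::field \<Rightarrow> 'k \<Rightarrow> (path \<Rightarrow> 'k) \<Rightarrow> (path \<Rightarrow> 'k)" where
  "sig l m f = (\<lambda>r. l ^ cnt Arr_d (snd r) * m ^ cnt Arr_c (snd r) * f (swp r))"

lemma sv_sv[simp]: "sv (sv v) = v" by (cases v) auto
lemma sa_sa[simp]: "sa (sa x) = x" by (cases x) auto
lemma sa_comp[simp]: "sa \<circ> sa = id" by (rule ext) simp
lemma map_sa_sa[simp]: "map sa (map sa xs) = xs" by (induction xs) auto
lemma swp_swp[simp]: "swp (swp r) = r" by (simp add: swp_def)
lemma src_sa[simp]: "src (sa x) = sv (src x)" by (cases x) auto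
lemma tgt_sa[simp]: "tgt (sa x) = sv (tgt x)" by (cases x) auto
lemma end_from_sa[simp]: "end_from (sv v) (map sa xs) = sv (end_from v xs)"
  by (induction xs arbitrary: v) auto
lemma valid_from_sa[simp]: "valid_from (sv v) (map sa xs) = valid_from v xs"
proof (induction xs arbitrary: v)
  case Nil then show ?case by simp
next
  case (Cons x xs)
  have "(sv (src x) = sv v) = (src x = v)" by (metis sv_sv)
  then show ?case using Cons by simp
qed
lemma valid_swp[simp]: "valid_path (swp r) = valid_path r"
  by (simp add: swp_def valid_path_def)
lemma swp_eq: "(swp r = P) = (r = swp P)" by auto
lemma cnt_sa_d[simp]: "cnt Arr_d (map sa xs) = cnt Arr_c xs"
  by (induction xs) (auto simp: cnt_def elim: sa.elims)
lemma cnt_sa_c[simp]: "cnt Arr_c (map sa xs) = cnt Arr_d xs"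
  by (induction xs) (auto simp: cnt_def elim: sa.elims)
lemma cnt_split: "cnt x (take i xs) + cnt x (drop i xs) = cnt x xs"
  by (metis append_take_drop_id cnt_def filter_append length_append)

lemma sig_supp: "supp (sig l m f) \<subseteq> swp ` supp f"
proof
  fix r assume "r \<in> supp (sig l m f)"
  then have "f (swp r) \<noteq> 0" by (auto simp: supp_def sig_def)
  then show "r \<in> swp ` supp f" by (intro image_eqI[of _ _ "swp r"]) (auto simp: supp_def)
qed

lemma sig_carrier: "f \<in> carrier PA \<Longrightarrow> sig l m f \<in> carrier (PA :: (path \<Rightarrow> 'k::field) ring)"
proof -
  assume f: "f \<in> carrier PA"
  have "finite (supp (sig l m f))" using finite_subset[OF sig_supp] PA_finite[OF f] by blast
  moreover have "valid_path x" if "sig l m f x \<noteq> 0" for x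
  proof -
    have "f (swp x) \<noteq> 0" using that by (auto simp: sig_def)
    then show ?thesis using PA_valid[OF f] by fastforce
  qed
  ultimately show ?thesis by (auto simp: PA_carrier)
qed

lemma sig_mult:
  assumes f: "f \<in> carrier PA" and g: "g \<in> carrier (PA :: (path \<Rightarrow> 'k::field) ring)"
  shows "sig l m (path_mult f g) = path_mult (sig l m f) (sig l m g)"
proof
  fix r :: path
  obtain v xs where r: "r = (v, xs)" by (cases r)
  have fs: "finite (supp (sig l m f))" "finite (supp (sig l m g))"
    using sig_carrier[OF f] sig_carrier[OF g] by (simp_all add: PA_carrier)
  have W: "l ^ cnt Arr_d xs * m ^ cnt Arr_c xs =
      (l ^ cnt Arr_d (take i xs) * m ^ cnt Arr_c (take i xs)) * (l ^ cnt Arr_d (drop i xs) * m ^ cnt Arr_c (drop i xs))" for i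
  proof -
    have a: "cnt Arr_d xs = cnt Arr_d (take i xs) + cnt Arr_d (drop i xs)" by (rule cnt_split[symmetric])
    have b: "cnt Arr_c xs = cnt Arr_c (take i xs) + cnt Arr_c (drop i xs)" by (rule cnt_split[symmetric])
    show ?thesis by (simp only: a b power_add) (simp add: algebra_simps)
  qed
  have "sig l m (path_mult f g) r = l ^ cnt Arr_d xs * m ^ cnt Arr_c xs *
      (\<Sum>i\<le>length xs. f (sv v, map sa (take i xs)) * g (sv (end_from v (take i xs)), map sa (drop i xs)))"
    unfolding r sig_def using mult_formula[OF PA_finite[OF f] PA_finite[OF g], of "sv v" "map sa xs"]
    by (simp add: swp_def take_map drop_map)
  also have "\<dots> = (\<Sum>i\<le>length xs. (l ^ cnt Arr_d (take i xs) * m ^ cnt Arr_c (take i xs) * f (sv v, map sa (take i xs))) *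
        (l ^ cnt Arr_d (drop i xs) * m ^ cnt Arr_c (drop i xs) * g (sv (end_from v (take i xs)), map sa (drop i xs))))"
    unfolding sum_distrib_left
  proof (rule sum.cong[OF refl])
    fix i
    show "l ^ cnt Arr_d xs * m ^ cnt Arr_c xs * (f (sv v, map sa (take i xs)) * g (sv (end_from v (take i xs)), map sa (drop i xs))) =
        l ^ cnt Arr_d (take i xs) * m ^ cnt Arr_c (take i xs) * f (sv v, map sa (take i xs)) *
        (l ^ cnt Arr_d (drop i xs) * m ^ cnt Arr_c (drop i xs) * g (sv (end_from v (take i xs)), map sa (drop i xs)))"
      by (subst W[of i]) (simp add: ac_simps)
  qed
  also have "\<dots> = path_mult (sig l m f) (sig l m g) r"
    unfolding r mult_formula[OF fs] unfolding sig_def by (simp add: swp_def)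
  finally show "sig l m (path_mult f g) r = path_mult (sig l m f) (sig l m g) r" .
qed

lemma sig_one: "sig l m (\<one>\<^bsub>PA\<^esub>) = (\<one>\<^bsub>PA\<^esub> :: path \<Rightarrow> 'k::field)"
proof
  fix r :: path
  obtain v xs where r: "r = (v, xs)" by (cases r)
  show "sig l m (\<one>\<^bsub>PA\<^esub>) r = (\<one>\<^bsub>PA\<^esub> :: path \<Rightarrow> 'k::field) r"
    unfolding r by (cases v) (auto simp: sig_def PA_simps swp_def cnt_def)
qed

lemma sig_hom: "sig l m \<in> ring_hom PA (PA :: (path \<Rightarrow> 'k::field) ring)"
proof (rule ring_hom_memI)
  fix x y :: "path \<Rightarrow> 'k" assume x: "x \<in> carrier PA" and y: "y \<in> carrier PA"
  show "sig l m x \<in> carrier PA" by (rule sig_carrier[OF x])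
  show "sig l m (x \<otimes>\<^bsub>PA\<^esub> y) = sig l m x \<otimes>\<^bsub>PA\<^esub> sig l m y"
    unfolding PA_simps by (rule sig_mult[OF x y])
  show "sig l m (x \<oplus>\<^bsub>PA\<^esub> y) = sig l m x \<oplus>\<^bsub>PA\<^esub> sig l m y"
    unfolding PA_simps by (rule ext) (simp add: sig_def algebra_simps)
next
  show "sig l m \<one>\<^bsub>PA\<^esub> = \<one>\<^bsub>PA\<^esub>" by (rule sig_one)
qed

lemma sig_comp: "l * m' = 1 \<Longrightarrow> m * l' = 1 \<Longrightarrow> sig l m (sig l' m' f) = (f :: path \<Rightarrow> 'k::field)"
proof
  fix r :: path
  assume h: "l * m' = 1" "m * l' = 1"
  obtain v xs where r: "r = (v, xs)" by (cases r)
  have "sig l m (sig l' m' f) r = (l * m') ^ cnt Arr_d xs * (m * l') ^ cnt Arr_c xs * f r"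
    unfolding r by (simp add: sig_def swp_def power_mult_distrib algebra_simps)
  then show "sig l m (sig l' m' f) r = f r" using h by simp
qed

lemma sig_bpath: "sig l m (bpath P) = (\<lambda>r. if r = swp P then l ^ cnt Arr_c (snd P) * m ^ cnt Arr_d (snd P) else (0::'k::field))"
  by (rule ext) (auto simp: sig_def bpath_def swp_eq swp_def)

lemma sig_diff: "sig l m (\<lambda>x. f x - g x) = (\<lambda>x. sig l m f x - sig l m g x)"
  by (rule ext) (simp add: sig_def algebra_simps)

lemma sig_smul: "sig l m (\<lambda>x. c * f x) = (\<lambda>x. c * sig l m f x)"
  by (rule ext) (simp add: sig_def algebra_simps)

lemma sig_rel1: "sig l m (rel1 :: path \<Rightarrow> 'k::field) = rel2 (l * m)"
  unfolding rel1_def sig_diff sig_bpath rel2_def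
  by (rule ext) (simp add: swp_def cnt_def bpath_def)

lemma sig_rel2: "s * (l * m) = 1 \<Longrightarrow> sig l m (rel2 s :: path \<Rightarrow> 'k::field) = rel1"
  unfolding rel2_def sig_diff sig_smul sig_bpath rel1_def
  by (rule ext) (simp add: swp_def cnt_def bpath_def algebra_simps)

lemma sig_add: "sig l m (\<lambda>x. f x + g x) = (\<lambda>x. sig l m f x + sig l m g x)"
  by (rule ext) (simp add: sig_def algebra_simps)

lemma sig_ideal_sub:
  fixes l m p' q' :: "'k::field"
  assumes "sig l m rel1 \<in> rel_ideal p'" "sig l m (rel2 q') \<in> rel_ideal p'"
  shows "sig l m ` rel_ideal q' \<subseteq> rel_ideal p'"
proof -
  interpret H: ring_hom_ring "PA :: (path \<Rightarrow> 'k) ring" PA "sig l m"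
    by (rule ring_hom_ringI2[OF ring_PA ring_PA sig_hom])
  have J: "ideal {r \<in> carrier PA. sig l m r \<in> rel_ideal p'} (PA :: (path \<Rightarrow> 'k) ring)"
    by (rule H.ideal_vimage[OF rel_ideal_ideal])
  have "genideal PA {rel1, rel2 q'} \<subseteq> {r \<in> carrier PA. sig l m r \<in> rel_ideal p'}"
    by (rule ring.genideal_minimal[OF ring_PA J]) (use assms rel1_carrier rel2_carrier in auto)
  then have "rel_ideal q' \<subseteq> {r \<in> carrier PA. sig l m r \<in> rel_ideal p'}"
    by (simp only: rel_ideal_def[of q'])
  then show ?thesis by blast
qed

lemma sig_scal_one: "sig l m (scal c \<one>\<^bsub>PA\<^esub>) = (scal c \<one>\<^bsub>PA\<^esub> :: path \<Rightarrow> 'k::field)"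
  using sig_one[of l m] unfolding scal_def by (simp add: sig_smul)

lemma backward_inv:
  fixes q :: "'k::field"
  assumes q: "q \<noteq> 0"
  shows "A_iso q (inverse q)"
proof -
  define p where "p = inverse q"
  have pq: "p * q = 1" "q * p = 1" using q by (simp_all add: p_def)
  define \<sigma> where "\<sigma> = sig p (1::'k)"
  define \<tau> where "\<tau> = sig (1::'k) q"
  have st: "\<And>f. \<sigma> (\<tau> f) = f" unfolding \<sigma>_def \<tau>_def by (rule sig_comp) (simp_all add: pq)
  have ts: "\<And>f. \<tau> (\<sigma> f) = f" unfolding \<sigma>_def \<tau>_def by (rule sig_comp) (simp_all add: pq)
  have sI: "\<sigma> ` rel_ideal q \<subseteq> rel_ideal p"
    unfolding \<sigma>_def by (rule sig_ideal_sub) (simp_all add: sig_rel1 sig_rel2 pq rel_in_ideal)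
  have tI: "\<tau> ` rel_ideal p \<subseteq> rel_ideal q"
    unfolding \<tau>_def by (rule sig_ideal_sub) (simp_all add: sig_rel1 sig_rel2 pq rel_in_ideal)
  have sC: "\<And>f. f \<in> carrier PA \<Longrightarrow> \<sigma> f \<in> carrier PA" unfolding \<sigma>_def by (rule sig_carrier)
  have tC: "\<And>f. f \<in> carrier PA \<Longrightarrow> \<tau> f \<in> carrier PA" unfolding \<tau>_def by (rule sig_carrier)
  have sadd: "\<And>f g. \<sigma> (f \<oplus>\<^bsub>PA\<^esub> g) = \<sigma> f \<oplus>\<^bsub>PA\<^esub> \<sigma> g" unfolding \<sigma>_def PA_simps by (rule sig_add)
  have img: "\<sigma> ` cls q f = cls p (\<sigma> f)" if f: "f \<in> carrier PA" for f
  proof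
    show "\<sigma> ` cls q f \<subseteq> cls p (\<sigma> f)"
      unfolding a_r_coset_def' using sI sadd by auto
    show "cls p (\<sigma> f) \<subseteq> \<sigma> ` cls q f"
    proof
      fix g assume "g \<in> cls p (\<sigma> f)"
      then obtain h where h: "h \<in> rel_ideal p" "g = h \<oplus>\<^bsub>PA\<^esub> \<sigma> f" unfolding a_r_coset_def' by auto
      have "\<tau> h \<in> rel_ideal q" using tI h(1) by blast
      moreover have "g = \<sigma> (\<tau> h \<oplus>\<^bsub>PA\<^esub> f)" using h(2) st sadd by simp
      ultimately show "g \<in> \<sigma> ` cls q f" unfolding a_r_coset_def' by blast
    qed
  qed
  define \<Phi> where "\<Phi> = (\<lambda>X. \<sigma> ` X)"
  have Phi_cls: "\<And>f. f \<in> carrier PA \<Longrightarrow> \<Phi> (cls q f) = cls p (\<sigma> f)" unfolding \<Phi>_def by (rule img)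
  have smult: "\<And>f g. f \<in> carrier PA \<Longrightarrow> g \<in> carrier PA \<Longrightarrow> \<sigma> (f \<otimes>\<^bsub>PA\<^esub> g) = \<sigma> f \<otimes>\<^bsub>PA\<^esub> \<sigma> g"
    unfolding \<sigma>_def PA_simps by (rule sig_mult)
  have sone: "\<sigma> \<one>\<^bsub>PA\<^esub> = \<one>\<^bsub>PA\<^esub>" unfolding \<sigma>_def by (rule sig_one)
  have iso: "\<Phi> \<in> ring_iso (A_alg q) (A_alg p)"
  proof (rule ring_iso_memI)
    fix X assume "X \<in> carrier (A_alg q)"
    then obtain f where f: "f \<in> carrier PA" "X = cls q f" by (auto simp: AQ_carrier)
    show "\<Phi> X \<in> carrier (A_alg p)" using f by (simp add: Phi_cls cls_in sC)
  next
    fix X Y assume "X \<in> carrier (A_alg q)" "Y \<in> carrier (A_alg q)"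
    then obtain f g where f: "f \<in> carrier PA" "X = cls q f" and g: "g \<in> carrier PA" "Y = cls q g"
      by (auto simp: AQ_carrier)
    show "\<Phi> (X \<otimes>\<^bsub>A_alg q\<^esub> Y) = \<Phi> X \<otimes>\<^bsub>A_alg p\<^esub> \<Phi> Y"
      using f g by (simp add: AQ_simps Phi_cls mult_closed_PA sC smult)
    show "\<Phi> (X \<oplus>\<^bsub>A_alg q\<^esub> Y) = \<Phi> X \<oplus>\<^bsub>A_alg p\<^esub> \<Phi> Y"
      using f g by (simp add: AQ_simps Phi_cls add_closed_PA sC sadd)
  next
    show "\<Phi> \<one>\<^bsub>A_alg q\<^esub> = \<one>\<^bsub>A_alg p\<^esub>"
      by (simp add: AQ_one Phi_cls one_carrier sone)
  next
    show "bij_betw \<Phi> (carrier (A_alg q)) (carrier (A_alg p))"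
    proof (rule bij_betw_imageI)
      show "inj_on \<Phi> (carrier (A_alg q))"
      proof (rule inj_onI)
        fix X Y assume "X \<in> carrier (A_alg q)" "Y \<in> carrier (A_alg q)" and e: "\<Phi> X = \<Phi> Y"
        then obtain f g where f: "f \<in> carrier PA" "X = cls q f" and g: "g \<in> carrier PA" "Y = cls q g"
          by (auto simp: AQ_carrier)
        have "cls p (\<sigma> f) = cls p (\<sigma> g)" using e f g Phi_cls by simp
        then have "(\<lambda>x. \<sigma> f x - \<sigma> g x) \<in> rel_ideal p" using cls_eq_iff sC f g by blast
        then have "\<tau> (\<lambda>x. \<sigma> f x - \<sigma> g x) \<in> rel_ideal q" using tI by blast
        moreover have "\<tau> (\<lambda>x. \<sigma> f x - \<sigma> g x) = (\<lambda>x. f x - g x)"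
          unfolding \<tau>_def sig_diff by (simp add: ts[unfolded \<tau>_def])
        ultimately have "(\<lambda>x. f x - g x) \<in> rel_ideal q" by simp
        then show "X = Y" using cls_eq_iff f g by blast
      qed
      show "\<Phi> ` carrier (A_alg q) = carrier (A_alg p)"
      proof
        show "\<Phi> ` carrier (A_alg q) \<subseteq> carrier (A_alg p)"
        proof
          fix Y assume "Y \<in> \<Phi> ` carrier (A_alg q)"
          then obtain X where X: "X \<in> carrier (A_alg q)" "Y = \<Phi> X" by blast
          then obtain f where f: "f \<in> carrier PA" "X = cls q f" by (auto simp: AQ_carrier)
          show "Y \<in> carrier (A_alg p)" using X(2) f Phi_cls[OF f(1)] cls_in[OF sC[OF f(1)]] by simp
        qed
        show "carrier (A_alg p) \<subseteq> \<Phi> ` carrier (A_alg q)"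
        proof
          fix Y assume "Y \<in> carrier (A_alg p)"
          then obtain g where g: "g \<in> carrier PA" "Y = cls p g" by (auto simp: AQ_carrier)
          have "Y = \<Phi> (cls q (\<tau> g))" using g Phi_cls[OF tC[OF g(1)]] st by simp
          then show "Y \<in> \<Phi> ` carrier (A_alg q)" using cls_in[OF tC[OF g(1)]] by blast
        qed
      qed
    qed
  qed
  have scal: "\<And>c. \<Phi> (A_scalar q c) = A_scalar p c"
    unfolding A_scalar_cls using Phi_cls[OF scal_carrier[OF one_carrier]]
    by (simp add: \<sigma>_def sig_scal_one)
  show ?thesis unfolding A_iso_def p_def[symmetric] using iso scal by blast
qed

lemma backward_id: "A_iso q (q::'k::field)"
  unfolding A_iso_def using ring_iso_set_refl[of "A_alg q"] by (intro exI[of _ id]) simp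

theorem proposition3p7:
  fixes p q :: "'k::field_char_0"
  assumes "alg_closed TYPE('k)"
    and "p \<noteq> 0" and "q \<noteq> 0"
  shows "A_iso q p \<longleftrightarrow> (p = q \<or> p = inverse q)"
proof
  assume "A_iso q p"
  then show "p = q \<or> p = inverse q" by (rule forward[OF assms(2,3)])
next
  assume "p = q \<or> p = inverse q"
  then show "A_iso q p" using backward_id[of q] backward_inv[OF assms(3)] by auto
qed

end
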